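(* Define the $\mathbf Z$-linear map $\psi:MPR\to NSymm$ on permutation words by $\psi(\sigma)=0$ if $\sigma$ is not lsd and $\psi(\sigma)=R_{\mathrm{comp}(\mathrm{desc}(\sigma))}$ if $\sigma$ is lsd (with $\psi$ of the empty word equal to $1$). Then $\psi$ is a morphism of algebras $(MPR,m')\to NSymm$ and $\psi\circ i=\mathrm{id}_{NSymm}$, i.e. $\psi$ is an algebra retraction of the injective Hopf algebra morphism $i:NSymm\to(MPR,m',\mu')$.
   Context: A permutation word of length $n$ is a word $[s_1,\dots,s_n]$ over $\mathbf N$ in which each of $1,\dots,n$ occurs once; $S_n$ is the set of these; the empty word is the unique one of length $0$. $\mathrm{desc}(\sigma)=\{i\in\{1,\dots,n-1\}:s_i>s_{i+1}\}$. $\sigma\in S_n$ is lsd if it is the lexicographically smallest element of $\{\tau\in S_n:\mathrm{desc}(\tau)=\mathrm{desc}(\sigma)\}$. A composition of $n$ is a word $\alpha=[a_1,\dots,a_r]$ over $\mathbf N$ with sum $n$; $\mathrm{desc}(\alpha)=\{a_1,a_1+a_2,\dots,a_1+\dots+a_{r-1}\}\subset\{1,\dots,n-1\}$; for $D=\{d_1<\dots<d_{r-1}\}\subset\{1,\dots,n-1\}$, $\mathrm{comp}(D)=[d_1,d_2-d_1,\dots,n-d_{r-1}]$ (inverse to $\mathrm{desc}$). $(MPR,m',\mu')$: free abelian group on all permutation words, unit the empty word; for $\sigma\in S_m,\tau\in S_n$, $m'(\sigma\otimes\tau)=\sum u*v$ over all pairs of words $u,v$ over $\mathbf N$ with $\mathrm{supp}(u)\cup\mathrm{supp}(v)=\{1,\dots,m+n\}$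 (disjointly), $\mathrm{st}(u)=\sigma$, $\mathrm{st}(v)=\tau$, where $*$ is concatenation, $\mathrm{supp}$ the set of letters, and $\mathrm{st}$ relabels the letters of a repetition-free word by $1,\dots,\text{length}$ order-preservingly; $\mu'(\tau)=\sum_{i=0}^n\tau_{\{1,\dots,i\}}\otimes\mathrm{st}(\tau_{\{i+1,\dots,n\}})$, $\tau_I$ keeping only the letters in $I$. $NSymm=\mathbf Z\langle Z_1,Z_2,\dots\rangle$ with $\mu(Z_n)=\sum_{i+j=n}Z_i\otimes Z_j$ ($Z_0=1$); $S_0=1$ and $\sum_{i=0}^n(-1)^iS_{n-i}Z_i=0$ for $n\ge1$; $S_\beta=S_{b_1}\cdots S_{b_k}$; $\alpha\ge\beta$ means the composition $\alpha$ refines $\beta$ ($\beta$ obtained by adding consecutive blocks of entries of $\alpha$); $R_\alpha=\sum_{\beta\le\alpha}(-1)^{\mathrm{lg}(\alpha)-\mathrm{lg}(\beta)}S_\beta$. These form a basis with $R_{[a_1,\dots,a_m]}R_{[b_1,\dots,b_n]}=R_{[a_1,\dots,a_m,b_1,\dots,b_n]}+R_{[a_1,\dots,a_{m-1},a_m+b_1,b_2,\dots,b_n]}$. $i:NSymm\to(MPR,m',\mu')$ is the injective Hopf algebra morphism determined by $i(S_n)=[1,2,\dots,n]$; it satisfies $i(R_\alpha)=\sum_{\sigma\in S_n,\ \mathrm{desc}(\sigma)=\mathrm{desc}(\alpha)}\sigma$ for $\alpha$ a composition of $n$. *)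

theory Defs
  imports Main
begin

definition perm_word :: "nat list \<Rightarrow> bool" where
  "perm_word w \<longleftrightarrow> distinct w \<and> set w = {1..length w}"

text \<open>Standardization of a repetition-free word: relabel letters by 1..length,
order-preservingly.\<close>
definition st :: "nat list \<Rightarrow> nat list" where
  "st w = map (\<lambda>x. card {y \<in> set w. y \<le> x}) w"

text \<open>Descent set, positions 1-indexed: i in desc iff s_i > s_(i+1).\<close>
definition desc :: "nat list \<Rightarrow> nat set" where
  "desc w = {i. 1 \<le> i \<and> i < length w \<and> w ! (i - 1) > w ! i}"

definition lsd :: "nat list \<Rightarrow> bool" where
  "lsd \<sigma> \<longleftrightarrow> perm_word \<sigma> \<and>
     (\<forall>\<tau>. perm_word \<tau> \<and> length \<tau> = length \<sigma> \<and> desc \<tau> = desc \<sigma> \<longrightarrow>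
           \<sigma> = \<tau> \<or> (\<sigma>, \<tau>) \<in> lexord {(a, b). a < b})"

text \<open>comp(D) for D a subset of {1..n-1}: the composition [d1, d2-d1, ..., n-d_(r-1)].\<close>
definition comp :: "nat \<Rightarrow> nat set \<Rightarrow> nat list" where
  "comp n D = (let ds = sorted_list_of_set D in
                 map (\<lambda>(a, b). a - b) (zip (ds @ [n]) (0 # ds)))"

text \<open>An element of NSymm is a finitely supported function from words over the
positive naturals to Z; the word [n1,...,nk] stands for the monomial Z_n1 ... Z_nk.\<close>

definition NSym :: "(nat list \<Rightarrow> int) set" where
  "NSym = {f. finite {w. f w \<noteq> 0} \<and> (\<forall>w. f w \<noteq> 0 \<longrightarrow> 0 \<notin> set w)}"

definition ns_one :: "nat list \<Rightarrow> int" where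
  "ns_one = (\<lambda>w. if w = [] then 1 else 0)"

definition ns_mult :: "(nat list \<Rightarrow> int) \<Rightarrow> (nat list \<Rightarrow> int) \<Rightarrow> (nat list \<Rightarrow> int)" where
  "ns_mult f g = (\<lambda>w. \<Sum>k\<le>length w. f (take k w) * g (drop k w))"

definition Zg :: "nat \<Rightarrow> nat list \<Rightarrow> int" where
  "Zg n = (if n = 0 then ns_one else (\<lambda>w. if w = [n] then 1 else 0))"

function S :: "nat \<Rightarrow> nat list \<Rightarrow> int" where
  "S n = (if n = 0 then ns_one
          else (\<lambda>w. - (\<Sum>i\<in>{1..n}. (-1) ^ i * ns_mult (S (n - i)) (Zg i) w)))"
  by auto
termination
  by (relation "measure id") auto

definition S_comp :: "nat list \<Rightarrow> nat list \<Rightarrow> int" where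
  "S_comp \<beta> = foldr ns_mult (map S \<beta>) ns_one"

definition coarsenings :: "nat list \<Rightarrow> nat list set" where
  "coarsenings \<alpha> = {map sum_list ks | ks. concat ks = \<alpha> \<and> (\<forall>k\<in>set ks. k \<noteq> [])}"

definition R :: "nat list \<Rightarrow> nat list \<Rightarrow> int" where
  "R \<alpha> = (\<lambda>w. \<Sum>\<beta>\<in>coarsenings \<alpha>. (-1) ^ (length \<alpha> - length \<beta>) * S_comp \<beta> w)"

definition MPR :: "(nat list \<Rightarrow> int) set" where
  "MPR = {F. finite {w. F w \<noteq> 0} \<and> (\<forall>w. F w \<noteq> 0 \<longrightarrow> perm_word w)}"

definition mpr_one :: "nat list \<Rightarrow> int" where
  "mpr_one = (\<lambda>w. if w = [] then 1 else 0)"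

text \<open>Bilinear extension of m': the coefficient of a permutation word w in
m'(F, G) is the sum over all splittings w = u @ v of F(st u) * G(st v).\<close>
definition mpr_mult :: "(nat list \<Rightarrow> int) \<Rightarrow> (nat list \<Rightarrow> int) \<Rightarrow> (nat list \<Rightarrow> int)" where
  "mpr_mult F G = (\<lambda>w. if perm_word w
       then (\<Sum>k\<le>length w. F (st (take k w)) * G (st (drop k w))) else 0)"

definition mpr_basis :: "nat list \<Rightarrow> nat list \<Rightarrow> int" where
  "mpr_basis \<sigma> = (\<lambda>w. if w = \<sigma> then 1 else 0)"

definition psi_word :: "nat list \<Rightarrow> nat list \<Rightarrow> int" where
  "psi_word \<sigma> = (if \<sigma> = [] then ns_one
                  else if lsd \<sigma> then R (comp (length \<sigma>) (desc \<sigma>))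
                  else (\<lambda>w. 0))"

definition psi :: "(nat list \<Rightarrow> int) \<Rightarrow> (nat list \<Rightarrow> int)" where
  "psi F = (\<lambda>w. \<Sum>\<sigma>\<in>{\<sigma>. F \<sigma> \<noteq> 0}. F \<sigma> * psi_word \<sigma> w)"

end

theory Submission
  imports Defs "HOL-Library.Function_Algebras"
begin

declare S.simps[simp del]

lemma S_0[simp]: "S 0 = ns_one" by (subst S.simps) simp

lemma sum_fun_apply: "(sum f A) x = (\<Sum>a\<in>A. f a x)"
  by (induction A rule: infinite_finite_induct) auto

lemma ns_mult_assoc: "ns_mult (ns_mult f g) h = ns_mult f (ns_mult g h)"
proof
  fix w :: "nat list"
  define n where "n = length w"
  define G where "G = (\<lambda>j l. f (take j w) * g (take l (drop j w)) * h (drop (j+l) w))"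
  have "ns_mult (ns_mult f g) h w = (\<Sum>k\<le>n. \<Sum>j\<le>k. G j (k - j))"
    unfolding ns_mult_def G_def n_def
    by (auto simp: sum_distrib_right min_def take_drop intro!: sum.cong)
  also have "\<dots> = (\<Sum>(j,l)\<in>{(j,l). j+l \<le> n}. G j l)"
    by (rule sum.triangle_reindex_eq[symmetric])
  also have "\<dots> = (\<Sum>j\<le>n. \<Sum>l\<le>n-j. G j l)"
  proof -
    have "{(j,l). j+l \<le> n} = (SIGMA j:{..n}. {..n-j})" by auto
    then show ?thesis by (simp add: sum.Sigma)
  qed
  also have "\<dots> = ns_mult f (ns_mult g h) w"
    unfolding ns_mult_def G_def n_def
    by (auto simp: sum_distrib_left mult.assoc add.commute intro!: sum.cong)
  finally show "ns_mult (ns_mult f g) h w = ns_mult f (ns_mult g h) w" .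
qed

lemma ns_mult_one_left[simp]: "ns_mult ns_one f = f"
proof
  fix w :: "nat list"
  have "ns_mult ns_one f w = (\<Sum>k\<in>{0}. ns_one (take k w) * f (drop k w))"
    unfolding ns_mult_def ns_one_def by (rule sum.mono_neutral_right) auto
  then show "ns_mult ns_one f w = f w" by (simp add: ns_one_def)
qed

lemma ns_mult_one_right[simp]: "ns_mult f ns_one = f"
proof
  fix w :: "nat list"
  have "ns_mult f ns_one w = (\<Sum>k\<in>{length w}. f (take k w) * ns_one (drop k w))"
    unfolding ns_mult_def ns_one_def by (rule sum.mono_neutral_right) auto
  then show "ns_mult f ns_one w = f w" by (simp add: ns_one_def)
qed

lemma ns_mult_add_left: "ns_mult (f + g) h = ns_mult f h + ns_mult g h"
  by (auto simp: ns_mult_def fun_eq_iff distrib_right sum.distrib)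
lemma ns_mult_add_right: "ns_mult h (f + g) = ns_mult h f + ns_mult h g"
  by (auto simp: ns_mult_def fun_eq_iff distrib_left sum.distrib)
lemma ns_mult_diff_left: "ns_mult (f - g) h = ns_mult f h - ns_mult g h"
  by (auto simp: ns_mult_def fun_eq_iff left_diff_distrib sum_subtractf)
lemma ns_mult_diff_right: "ns_mult h (f - g) = ns_mult h f - ns_mult h g"
  by (auto simp: ns_mult_def fun_eq_iff right_diff_distrib sum_subtractf)
lemma ns_mult_neg_left: "ns_mult (- f) h = - ns_mult f h"
  by (auto simp: ns_mult_def fun_eq_iff sum_negf)
lemma ns_mult_zero_left[simp]: "ns_mult 0 h = 0"
  by (auto simp: ns_mult_def fun_eq_iff)
lemma ns_mult_zero_right[simp]: "ns_mult h 0 = 0"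
  by (auto simp: ns_mult_def fun_eq_iff)
lemma ns_mult_scale_left: "ns_mult (\<lambda>w. c * f w) h = (\<lambda>w. c * ns_mult f h w)"
  by (auto simp: ns_mult_def fun_eq_iff sum_distrib_left mult.assoc)
lemma ns_mult_scale_right: "ns_mult h (\<lambda>w. c * f w) = (\<lambda>w. c * ns_mult h f w)"
  by (auto simp: ns_mult_def fun_eq_iff sum_distrib_left mult.left_commute)
lemma ns_mult_sum_left: "ns_mult (\<lambda>w. \<Sum>a\<in>A. f a w) h = (\<lambda>w. \<Sum>a\<in>A. ns_mult (f a) h w)"
  by (auto simp: ns_mult_def fun_eq_iff sum_distrib_right intro: sum.swap)
lemma ns_mult_sum_right: "ns_mult h (\<lambda>w. \<Sum>a\<in>A. f a w) = (\<lambda>w. \<Sum>a\<in>A. ns_mult h (f a) w)"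
  by (auto simp: ns_mult_def fun_eq_iff sum_distrib_left intro: sum.swap)

lemma NSym_iff: "f \<in> NSym \<longleftrightarrow> finite {w. f w \<noteq> 0} \<and> (\<forall>w. f w \<noteq> 0 \<longrightarrow> 0 \<notin> set w)"
  by (simp add: NSym_def)

lemma NSym_one[simp]: "ns_one \<in> NSym"
proof -
  have "{w. ns_one w \<noteq> 0} \<subseteq> {[]}" by (auto simp: ns_one_def)
  then show ?thesis by (auto simp: NSym_def ns_one_def intro: finite_subset)
qed

lemma NSym_zero[simp]: "0 \<in> NSym" "(\<lambda>w. 0) \<in> NSym"
  by (auto simp: NSym_def)

lemma NSym_add[intro]: "f \<in> NSym \<Longrightarrow> g \<in> NSym \<Longrightarrow> (\<lambda>w. f w + g w) \<in> NSym"
proof -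
  assume a: "f \<in> NSym" "g \<in> NSym"
  have "{w. f w + g w \<noteq> 0} \<subseteq> {w. f w \<noteq> 0} \<union> {w. g w \<noteq> 0}" by auto
  with a show ?thesis unfolding NSym_def by (auto intro: finite_subset)
qed

lemma NSym_scale[intro]: "f \<in> NSym \<Longrightarrow> (\<lambda>w. c * f w) \<in> NSym"
proof -
  assume a: "f \<in> NSym"
  have "{w. c * f w \<noteq> 0} \<subseteq> {w. f w \<noteq> 0}" by auto
  with a show ?thesis unfolding NSym_def by (auto intro: finite_subset)
qed

lemma NSym_uminus[intro]: "f \<in> NSym \<Longrightarrow> (\<lambda>w. - f w) \<in> NSym"
  using NSym_scale[of f "-1"] by simp

lemma NSym_diff[intro]: "f \<in> NSym \<Longrightarrow> g \<in> NSym \<Longrightarrow> (\<lambda>w. f w - g w) \<in> NSym"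
  using NSym_add[of f "\<lambda>w. - g w"] NSym_uminus[of g] by simp

lemma NSym_plus[intro]: "f \<in> NSym \<Longrightarrow> g \<in> NSym \<Longrightarrow> f + g \<in> NSym"
  using NSym_add[of f g] by (simp add: plus_fun_def)
lemma NSym_minus[intro]: "f \<in> NSym \<Longrightarrow> g \<in> NSym \<Longrightarrow> f - g \<in> NSym"
  using NSym_diff[of f g] by (simp add: fun_diff_def)

lemma NSym_sum[intro]: "(\<And>a. a \<in> A \<Longrightarrow> f a \<in> NSym) \<Longrightarrow> (\<lambda>w. \<Sum>a\<in>A. f a w) \<in> NSym"
proof (induction A rule: infinite_finite_induct)
  case (insert x F)
  then have "(\<lambda>w. f x w + (\<Sum>a\<in>F. f a w)) \<in> NSym" by (intro NSym_add) auto
  with insert show ?case by simp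
qed auto

lemma NSym_mult[intro]: "f \<in> NSym \<Longrightarrow> g \<in> NSym \<Longrightarrow> ns_mult f g \<in> NSym"
proof -
  assume a: "f \<in> NSym" "g \<in> NSym"
  let ?A = "{w. f w \<noteq> 0}" and ?B = "{w. g w \<noteq> 0}"
  have "{w. ns_mult f g w \<noteq> 0} \<subseteq> (\<lambda>(u,v). u @ v) ` (?A \<times> ?B)"
  proof
    fix w assume "w \<in> {w. ns_mult f g w \<noteq> 0}"
    then obtain k where "f (take k w) * g (drop k w) \<noteq> 0"
      unfolding ns_mult_def by (auto elim: sum.not_neutral_contains_not_neutral)
    then show "w \<in> (\<lambda>(u,v). u @ v) ` (?A \<times> ?B)"
      by (intro image_eqI[of _ _ "(take k w, drop k w)"]) auto
  qed
  moreover have "finite ((\<lambda>(u,v). u @ v) ` (?A \<times> ?B))" using a by (auto simp: NSym_def)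
  moreover have "0 \<notin> set w" if "ns_mult f g w \<noteq> 0" for w
  proof -
    from that obtain k where "f (take k w) * g (drop k w) \<noteq> 0"
      unfolding ns_mult_def by (auto elim: sum.not_neutral_contains_not_neutral)
    then have "0 \<notin> set (take k w)" "0 \<notin> set (drop k w)" using a by (auto simp: NSym_def)
    then show ?thesis by (metis Un_iff append_take_drop_id set_append)
  qed
  ultimately show ?thesis unfolding NSym_def by (auto intro: finite_subset)
qed

lemma NSym_Zg[intro]: "Zg n \<in> NSym"
proof -
  have "{w. (if w = [n] then 1 else 0::int) \<noteq> 0} \<subseteq> {[n]}" by auto
  then show ?thesis using NSym_one unfolding Zg_def NSym_def by (auto intro: finite_subset)
qed

lemma NSym_S[intro]: "S n \<in> NSym"
proof (induction n rule: less_induct)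
  case (less n)
  show ?case
  proof (cases "n = 0")
    case True then show ?thesis by simp
  next
    case False
    have "(\<lambda>w. \<Sum>i\<in>{1..n}. (-1) ^ i * ns_mult (S (n - i)) (Zg i) w) \<in> NSym"
      using less False by (intro NSym_sum NSym_scale NSym_mult) auto
    then have "(\<lambda>w. - (\<Sum>i\<in>{1..n}. (-1) ^ i * ns_mult (S (n - i)) (Zg i) w)) \<in> NSym"
      by (rule NSym_uminus)
    with False show ?thesis by (subst S.simps) simp
  qed
qed

lemma NSym_S_comp[intro]: "S_comp b \<in> NSym"
  unfolding S_comp_def by (induction b) auto

lemma NSym_R[intro]: "R a \<in> NSym"
  unfolding R_def by (intro NSym_sum NSym_scale) auto

lemma NSym_psi_word[intro]: "psi_word s \<in> NSym"
  unfolding psi_word_def by auto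

lemma NSym_psi[intro]: "psi F \<in> NSym"
  unfolding psi_def by (intro NSym_sum NSym_scale) auto

definition addhd :: "nat \<Rightarrow> nat list \<Rightarrow> nat list" where
  "addhd a l = (case l of [] \<Rightarrow> [] | c # cs \<Rightarrow> (a + c) # cs)"

lemma addhd_Cons[simp]: "addhd a (c # cs) = (a + c) # cs"
  by (simp add: addhd_def)

fun co :: "nat list \<Rightarrow> nat list set" where
  "co [] = {[]}"
| "co [a] = {[a]}"
| "co (a # b # r) = Cons a ` co (b # r) \<union> addhd a ` co (b # r)"

lemma coarsenings_Nil: "coarsenings [] = {[]}"
  unfolding coarsenings_def by auto

lemma coarsenings_single: "coarsenings [a] = {[a]}"
proof -
  have "ks = [[a]]" if "concat ks = [a]" "\<forall>k\<in>set ks. k \<noteq> []" for ks :: "nat list list"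
    using that
  proof (cases ks)
    case (Cons k ks')
    with that have "k = [a]" "ks' = []"
      by (auto simp: Cons_eq_append_conv append_eq_Cons_conv)
    with Cons show ?thesis by simp
  qed auto
  note h = this
  show ?thesis unfolding coarsenings_def
  proof (intro set_eqI iffI)
    fix x assume "x \<in> {map sum_list ks |ks. concat ks = [a] \<and> (\<forall>k\<in>set ks. k \<noteq> [])}"
    then obtain ks where "x = map sum_list ks" "concat ks = [a]" "\<forall>k\<in>set ks. k \<noteq> []" by blast
    moreover have "ks = [[a]]" using h calculation(2,3) by blast
    ultimately show "x \<in> {[a]}" by simp
  qed (auto intro!: exI[of _ "[[a]]"])
qed

lemma coarsenings_cons2:
  "coarsenings (a # b # r) = Cons a ` coarsenings (b # r) \<union> addhd a ` coarsenings (b # r)"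
proof
  show "coarsenings (a # b # r) \<subseteq> Cons a ` coarsenings (b # r) \<union> addhd a ` coarsenings (b # r)"
  proof
    fix \<beta> assume "\<beta> \<in> coarsenings (a # b # r)"
    then obtain ks where ks: "\<beta> = map sum_list ks" "concat ks = a # b # r" "\<forall>k\<in>set ks. k \<noteq> []"
      unfolding coarsenings_def by auto
    then obtain k1 ks' where k: "ks = k1 # ks'" by (cases ks) auto
    with ks obtain k1' where k1: "k1 = a # k1'"
      by (cases k1) auto
    show "\<beta> \<in> Cons a ` coarsenings (b # r) \<union> addhd a ` coarsenings (b # r)"
    proof (cases "k1' = []")
      case True
      then have "map sum_list ks' \<in> coarsenings (b # r)"
        using ks k k1 unfolding coarsenings_def by auto
      then show ?thesis using ks k k1 True by auto
    next
      case False
      then have "map sum_list (k1' # ks') \<in> coarsenings (b # r)"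
        using ks k k1 unfolding coarsenings_def by (auto intro!: exI[of _ "k1' # ks'"])
      moreover have "\<beta> = addhd a (map sum_list (k1' # ks'))" using ks k k1 by simp
      ultimately show ?thesis by blast
    qed
  qed
next
  show "Cons a ` coarsenings (b # r) \<union> addhd a ` coarsenings (b # r) \<subseteq> coarsenings (a # b # r)"
  proof
    fix \<beta> assume "\<beta> \<in> Cons a ` coarsenings (b # r) \<union> addhd a ` coarsenings (b # r)"
    then obtain ks where ks: "concat ks = b # r" "\<forall>k\<in>set ks. k \<noteq> []"
      and \<beta>: "\<beta> = a # map sum_list ks \<or> \<beta> = addhd a (map sum_list ks)"
      unfolding coarsenings_def by auto
    from \<beta> show "\<beta> \<in> coarsenings (a # b # r)"
    proof
      assume "\<beta> = a # map sum_list ks"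
      then show ?thesis using ks unfolding coarsenings_def by (auto intro!: exI[of _ "[a] # ks"])
    next
      assume h: "\<beta> = addhd a (map sum_list ks)"
      from ks obtain k1 ks' where k: "ks = k1 # ks'" by (cases ks) auto
      show ?thesis using ks h k unfolding coarsenings_def
        by (auto intro!: exI[of _ "(a # k1) # ks'"])
    qed
  qed
qed

lemma coarsenings_co: "coarsenings \<alpha> = co \<alpha>"
  by (induction \<alpha> rule: co.induct) (simp_all add: coarsenings_Nil coarsenings_single coarsenings_cons2)

lemma finite_co[simp]: "finite (co \<alpha>)"
  by (induction \<alpha> rule: co.induct) auto

lemma co_len: "\<beta> \<in> co \<alpha> \<Longrightarrow> length \<beta> \<le> length \<alpha>"
proof (induction \<alpha> arbitrary: \<beta> rule: co.induct)
  case (3 a b r)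
  from "3.prems" consider \<beta>' where "\<beta>' \<in> co (b # r)" "\<beta> = a # \<beta>'"
    | \<beta>' where "\<beta>' \<in> co (b # r)" "\<beta> = addhd a \<beta>'" by auto
  then show ?case
  proof cases
    case 1 then show ?thesis using "3.IH"(1)[OF 1(1)] by simp
  next
    case 2 then show ?thesis using "3.IH"(2)[OF 2(1)] by (simp add: addhd_def split: list.splits)
  qed
qed auto

lemma co_ne: "\<beta> \<in> co \<alpha> \<Longrightarrow> \<alpha> \<noteq> [] \<Longrightarrow> \<beta> \<noteq> []"
proof (induction \<alpha> arbitrary: \<beta> rule: co.induct)
  case (3 a b r)
  from "3.prems" consider \<beta>' where "\<beta>' \<in> co (b # r)" "\<beta> = a # \<beta>'"
    | \<beta>' where "\<beta>' \<in> co (b # r)" "\<beta> = addhd a \<beta>'" by auto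
  then show ?case
  proof cases
    case 1 then show ?thesis by simp
  next
    case 2 then show ?thesis using "3.IH"(2)[OF 2(1)] by (simp add: addhd_def split: list.splits)
  qed
qed auto

lemma co_pos: "\<beta> \<in> co \<alpha> \<Longrightarrow> \<forall>x\<in>set \<alpha>. x > 0 \<Longrightarrow> \<forall>x\<in>set \<beta>. x > 0"
proof (induction \<alpha> arbitrary: \<beta> rule: co.induct)
  case (3 a b r)
  from "3.prems"(1) consider \<beta>' where "\<beta>' \<in> co (b # r)" "\<beta> = a # \<beta>'"
    | \<beta>' where "\<beta>' \<in> co (b # r)" "\<beta> = addhd a \<beta>'" by auto
  then show ?case
  proof cases
    case 1 then show ?thesis using "3.IH"(1)[OF 1(1)] "3.prems"(2) by simp
  next
    case 2 then show ?thesis using "3.IH"(2)[OF 2(1)] "3.prems"(2)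
      by (auto simp: addhd_def split: list.splits)
  qed
qed auto

lemma co_addhd: "co ((c + x) # r) = addhd c ` co (x # r)"
proof (induction r arbitrary: x)
  case Nil then show ?case by simp
next
  case (Cons y r)
  have ne: "\<beta> \<noteq> []" if "\<beta> \<in> co (y # r)" for \<beta> using co_ne[OF that] by simp
  have "addhd c ` addhd x ` co (y # r) = addhd (c + x) ` co (y # r)"
    unfolding image_image using ne by (intro image_cong) (auto simp: addhd_def split: list.splits)
  then show ?case by (simp add: image_Un image_image)
qed

lemma R_co: "R \<alpha> = (\<lambda>w. \<Sum>\<beta>\<in>co \<alpha>. (-1) ^ (length \<alpha> - length \<beta>) * S_comp \<beta> w)"
  unfolding R_def coarsenings_co ..

lemma S_comp_Nil[simp]: "S_comp [] = ns_one" by (simp add: S_comp_def)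
lemma S_comp_Cons: "S_comp (a # \<beta>) = ns_mult (S a) (S_comp \<beta>)" by (simp add: S_comp_def)
lemma S_comp_append: "S_comp (\<alpha> @ \<beta>) = ns_mult (S_comp \<alpha>) (S_comp \<beta>)"
  by (induction \<alpha>) (simp_all add: S_comp_Cons ns_mult_assoc)

lemma R_single: "R [a] = S a"
  by (simp add: R_co S_comp_Cons)

lemma inj_on_addhd: "inj_on (addhd a) {l. l \<noteq> []}"
  by (auto simp: inj_on_def addhd_def split: list.splits)

lemma R_rec:
  assumes pos: "\<forall>x\<in>set (a # b # r). x > 0"
  shows "R (a # b # r) = ns_mult (S a) (R (b # r)) - R ((a + b) # r)"
proof
  fix w
  let ?C = "co (b # r)"
  let ?f = "\<lambda>\<beta>. (-1::int) ^ (length (a # b # r) - length \<beta>) * S_comp \<beta> w"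
  have ne: "\<And>\<beta>. \<beta> \<in> ?C \<Longrightarrow> \<beta> \<noteq> []" using co_ne by blast
  have len: "\<And>\<beta>. \<beta> \<in> ?C \<Longrightarrow> length \<beta> \<le> Suc (length r)" using co_len by fastforce
  have posC: "\<And>\<beta>. \<beta> \<in> ?C \<Longrightarrow> \<forall>x\<in>set \<beta>. x > 0" using co_pos pos by (meson list.set_intros(2))
  have disj: "Cons a ` ?C \<inter> addhd a ` ?C = {}"
  proof (rule ccontr)
    assume "Cons a ` ?C \<inter> addhd a ` ?C \<noteq> {}"
    then obtain \<beta>1 \<beta>2 where b: "\<beta>1 \<in> ?C" "\<beta>2 \<in> ?C" "a # \<beta>1 = addhd a \<beta>2" by auto
    then obtain c cs where "\<beta>2 = c # cs" using ne by (cases \<beta>2) auto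
    with b posC[OF b(2)] show False by auto
  qed
  have inj2: "inj_on (addhd a) ?C" using inj_on_addhd by (rule inj_on_subset) (use ne in auto)
  have "R (a # b # r) w = (\<Sum>\<beta>\<in>Cons a ` ?C. ?f \<beta>) + (\<Sum>\<beta>\<in>addhd a ` ?C. ?f \<beta>)"
    unfolding R_co co.simps by (rule sum.union_disjoint) (use disj in auto)
  also have "(\<Sum>\<beta>\<in>Cons a ` ?C. ?f \<beta>) = (\<Sum>\<beta>\<in>?C. ?f (a # \<beta>))"
    by (simp add: sum.reindex)
  also have "\<dots> = ns_mult (S a) (R (b # r)) w"
    unfolding R_co ns_mult_sum_right ns_mult_scale_right by (simp add: S_comp_Cons)
  also have "(\<Sum>\<beta>\<in>addhd a ` ?C. ?f \<beta>) = (\<Sum>\<beta>\<in>?C. ?f (addhd a \<beta>))"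
    by (simp add: sum.reindex[OF inj2])
  also have "\<dots> = - R ((a + b) # r) w"
  proof -
    have "R ((a + b) # r) w = (\<Sum>\<beta>\<in>addhd a ` ?C. (-1::int) ^ (length ((a + b) # r) - length \<beta>) * S_comp \<beta> w)"
      unfolding R_co co_addhd ..
    also have "\<dots> = (\<Sum>\<beta>\<in>?C. (-1::int) ^ (length ((a + b) # r) - length (addhd a \<beta>)) * S_comp (addhd a \<beta>) w)"
      by (simp add: sum.reindex[OF inj2])
    also have "\<dots> = - (\<Sum>\<beta>\<in>?C. ?f (addhd a \<beta>))"
      unfolding sum_negf[symmetric]
    proof (rule sum.cong[OF refl])
      fix \<beta> assume "\<beta> \<in> ?C"
      then obtain c cs where c: "\<beta> = c # cs" and l: "length cs \<le> length r" using ne len by (cases \<beta>) fastforce+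
      have "Suc (Suc (length r)) - length (addhd a \<beta>) = Suc (Suc (length r) - length (addhd a \<beta>))"
        using c l by simp
      then show "(-1::int) ^ (length ((a + b) # r) - length (addhd a \<beta>)) * S_comp (addhd a \<beta>) w = - ?f (addhd a \<beta>)"
        by simp
    qed
    finally show ?thesis by simp
  qed
  finally show "R (a # b # r) w = (ns_mult (S a) (R (b # r)) - R ((a + b) # r)) w" by simp
qed

definition merge :: "nat list \<Rightarrow> nat list \<Rightarrow> nat list" where
  "merge \<alpha> \<beta> = butlast \<alpha> @ [last \<alpha> + hd \<beta>] @ tl \<beta>"

lemma merge_single: "merge [a] (b # r) = (a + b) # r" by (simp add: merge_def)
lemma merge_cons2: "merge (a # x # r') \<beta> = a # merge (x # r') \<beta>" by (simp add: merge_def)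
lemma merge_addhd: "merge ((a + x) # r') \<beta> = addhd a (merge (x # r') \<beta>)"
  by (cases r' rule: rev_cases) (auto simp: merge_def)
lemma merge_ne: "merge \<alpha> \<beta> \<noteq> []" by (simp add: merge_def)

lemma R_prod:
  assumes "\<alpha> \<noteq> []" "\<beta> \<noteq> []" "\<forall>x\<in>set \<alpha>. x > 0" "\<forall>x\<in>set \<beta>. x > 0"
  shows "ns_mult (R \<alpha>) (R \<beta>) = R (\<alpha> @ \<beta>) + R (merge \<alpha> \<beta>)"
  using assms
proof (induction "length \<alpha>" arbitrary: \<alpha> rule: less_induct)
  case less
  obtain b r where \<beta>: "\<beta> = b # r" using less.prems by (cases \<beta>) auto
  show ?case
  proof (cases \<alpha>)
    case Nil with less.prems show ?thesis by simp
  next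
    case (Cons a \<alpha>')
    show ?thesis
    proof (cases \<alpha>')
      case Nil
      then show ?thesis using Cons \<beta> less.prems
        by (simp add: R_single R_rec merge_single)
    next
      case (Cons a' r')
      note \<alpha> = \<open>\<alpha> = a # \<alpha>'\<close> Cons
      have IH1: "ns_mult (R (a' # r')) (R \<beta>) = R ((a' # r') @ \<beta>) + R (merge (a' # r') \<beta>)"
        using less.prems \<alpha> by (intro less.hyps) auto
      have IH2: "ns_mult (R ((a + a') # r')) (R \<beta>) = R (((a + a') # r') @ \<beta>) + R (merge ((a + a') # r') \<beta>)"
        using less.prems \<alpha> by (intro less.hyps) auto
      obtain c rest where m: "merge (a' # r') \<beta> = c # rest" using merge_ne by (cases "merge (a' # r') \<beta>") auto
      have posm: "\<forall>x\<in>set (merge (a' # r') \<beta>). x > 0"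
        using less.prems \<alpha> \<beta> by (cases r' rule: rev_cases) (auto simp: merge_def)
      have e1: "R (\<alpha> @ \<beta>) = ns_mult (S a) (R ((a' # r') @ \<beta>)) - R (((a + a') # r') @ \<beta>)"
        using less.prems \<alpha> R_rec[of a a' "r' @ \<beta>"] by auto
      have e2: "R (merge \<alpha> \<beta>) = ns_mult (S a) (R (merge (a' # r') \<beta>)) - R (merge ((a + a') # r') \<beta>)"
        using R_rec[of a c rest] less.prems \<alpha> posm m merge_addhd[of a a' r' \<beta>]
        by (simp add: merge_cons2)
      have "ns_mult (R \<alpha>) (R \<beta>) = ns_mult (ns_mult (S a) (R (a' # r')) - R ((a + a') # r')) (R \<beta>)"
        using less.prems \<alpha> by (simp add: R_rec)
      also have "\<dots> = ns_mult (S a) (ns_mult (R (a' # r')) (R \<beta>)) - ns_mult (R ((a + a') # r')) (R \<beta>)"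
        by (simp add: ns_mult_diff_left ns_mult_assoc)
      also have "\<dots> = R (\<alpha> @ \<beta>) + R (merge \<alpha> \<beta>)"
        unfolding IH1 IH2 e1 e2 ns_mult_add_right by (simp add: algebra_simps)
      finally show ?thesis .
    qed
  qed
qed

lemma length_st[simp]: "length (st w) = length w" by (simp add: st_def)

lemma st_nth: "i < length w \<Longrightarrow> st w ! i = card {y \<in> set w. y \<le> w ! i}"
  by (simp add: st_def)

lemma st_less: "i < length w \<Longrightarrow> j < length w \<Longrightarrow> st w ! i < st w ! j \<longleftrightarrow> w ! i < w ! j"
proof -
  assume ij: "i < length w" "j < length w"
  show ?thesis
  proof
    assume "st w ! i < st w ! j"
    then have "card {y \<in> set w. y \<le> w ! i} < card {y \<in> set w. y \<le> w ! j}" using ij by (simp add: st_nth)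
    moreover have "\<not> w ! i < w ! j \<Longrightarrow> card {y \<in> set w. y \<le> w ! j} \<le> card {y \<in> set w. y \<le> w ! i}"
      by (intro card_mono) auto
    ultimately show "w ! i < w ! j" by linarith
  next
    assume "w ! i < w ! j"
    moreover have "w ! j \<in> {y \<in> set w. y \<le> w ! j}" "w ! j \<notin> {y \<in> set w. y \<le> w ! i}"
      using ij calculation by auto
    moreover have "{y \<in> set w. y \<le> w ! i} \<subseteq> {y \<in> set w. y \<le> w ! j}"
      using calculation(1) by auto
    ultimately have "{y \<in> set w. y \<le> w ! i} \<subset> {y \<in> set w. y \<le> w ! j}" by blast
    then have "card {y \<in> set w. y \<le> w ! i} < card {y \<in> set w. y \<le> w ! j}" by (intro psubset_card_mono) auto
    then show "st w ! i < st w ! j" using ij by (simp add: st_nth)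
  qed
qed

lemma st_eq_iff: "distinct w \<Longrightarrow> i < length w \<Longrightarrow> j < length w \<Longrightarrow> st w ! i = st w ! j \<longleftrightarrow> i = j"
proof -
  assume a: "distinct w" "i < length w" "j < length w"
  show ?thesis
  proof
    assume e: "st w ! i = st w ! j"
    have "\<not> w ! i < w ! j" "\<not> w ! j < w ! i" using st_less[OF a(2,3)] st_less[OF a(3,2)] e by auto
    then have "w ! i = w ! j" by simp
    then show "i = j" using a nth_eq_iff_index_eq by blast
  qed simp
qed

lemma distinct_st: "distinct w \<Longrightarrow> distinct (st w)"
  unfolding distinct_conv_nth[of "st w"] using st_eq_iff by simp

lemma perm_word_st: "distinct w \<Longrightarrow> perm_word (st w)"
proof -
  assume d: "distinct w"
  have sub: "set (st w) \<subseteq> {1..length w}"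
  proof
    fix x assume "x \<in> set (st w)"
    then obtain i where i: "i < length w" "x = st w ! i" by (auto simp: in_set_conv_nth)
    have "x = card {y \<in> set w. y \<le> w ! i}" using i by (simp add: st_nth)
    moreover have "w ! i \<in> {y \<in> set w. y \<le> w ! i}" using i by auto
    then have "card {y \<in> set w. y \<le> w ! i} > 0" by (subst card_gt_0_iff) auto
    moreover have "card {y \<in> set w. y \<le> w ! i} \<le> card (set w)" by (intro card_mono) auto
    ultimately show "x \<in> {1..length w}" using d by (simp add: distinct_card)
  qed
  have "card (set (st w)) = length w" using distinct_st[OF d] by (simp add: distinct_card)
  then have "set (st w) = {1..length w}" using sub by (intro card_subset_eq) auto
  then show ?thesis using distinct_st[OF d] by (simp add: perm_word_def)
qed

lemma st_perm_word: "perm_word w \<Longrightarrow> st w = w"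
proof -
  assume p: "perm_word w"
  have "card {y \<in> set w. y \<le> x} = x" if "x \<in> set w" for x
  proof -
    have "{y \<in> set w. y \<le> x} = {1..x}" using p that by (auto simp: perm_word_def)
    then show ?thesis by simp
  qed
  then show ?thesis by (simp add: st_def map_idI)
qed

lemma desc_st: "desc (st w) = desc w"
  unfolding desc_def by (auto simp: st_less)

lemma desc_take: "desc (take m w) = {i \<in> desc w. i < m}"
  unfolding desc_def by auto

lemma desc_drop: "desc (drop m w) = {i. 1 \<le> i \<and> i + m \<in> desc w}"
proof (rule set_eqI)
  fix i
  show "i \<in> desc (drop m w) \<longleftrightarrow> i \<in> {i. 1 \<le> i \<and> i + m \<in> desc w}"
  proof (cases "1 \<le> i")
    case True
    then have e: "m + (i - 1) = i + m - 1" by simp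
    show ?thesis unfolding desc_def using True by (auto simp: e add.commute)
  qed (simp add: desc_def)
qed

definition gl :: "nat list \<Rightarrow> bool" where
  "gl w \<longleftrightarrow> (\<forall>i k k'. 0 < i \<and> i < length w \<and> w ! (i - 1) < w ! i \<and> k < i \<and> i \<le> k' \<and> k' < length w
      \<longrightarrow> w ! k < w ! k')"

lemma gl_st: "gl (st w) \<longleftrightarrow> gl w"
proof -
  have "(0 < i \<and> i < length w \<and> st w ! (i - 1) < st w ! i \<and> k < i \<and> i \<le> k' \<and> k' < length w
      \<longrightarrow> st w ! k < st w ! k') \<longleftrightarrow>
      (0 < i \<and> i < length w \<and> w ! (i - 1) < w ! i \<and> k < i \<and> i \<le> k' \<and> k' < length w
      \<longrightarrow> w ! k < w ! k')" for i k k'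
  proof (cases "0 < i \<and> i < length w \<and> k < i \<and> i \<le> k' \<and> k' < length w")
    case True
    then have "i - 1 < length w" by auto
    then show ?thesis using True st_less[of "i - 1" w i] st_less[of k w k'] by auto
  qed auto
  then show ?thesis unfolding gl_def by simp
qed

lemma gl_take: "gl w \<Longrightarrow> gl (take m w)"
  unfolding gl_def
proof (intro allI impI)
  fix i k k'
  assume g: "\<forall>i k k'. 0 < i \<and> i < length w \<and> w ! (i - 1) < w ! i \<and> k < i \<and> i \<le> k' \<and> k' < length w \<longrightarrow> w ! k < w ! k'"
    and h: "0 < i \<and> i < length (take m w) \<and> take m w ! (i - 1) < take m w ! i \<and> k < i \<and> i \<le> k' \<and> k' < length (take m w)"
  have "w ! k < w ! k'" using h by (intro g[rule_format, of i]) auto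
  then show "take m w ! k < take m w ! k'" using h by auto
qed

lemma gl_drop: "gl w \<Longrightarrow> gl (drop m w)"
  unfolding gl_def
proof (intro allI impI)
  fix i k k'
  assume g: "\<forall>i k k'. 0 < i \<and> i < length w \<and> w ! (i - 1) < w ! i \<and> k < i \<and> i \<le> k' \<and> k' < length w \<longrightarrow> w ! k < w ! k'"
    and h: "0 < i \<and> i < length (drop m w) \<and> drop m w ! (i - 1) < drop m w ! i \<and> k < i \<and> i \<le> k' \<and> k' < length (drop m w)"
  have "w ! (m + k) < w ! (m + k')"
  proof (rule g[rule_format, of "m + i"], intro conjI)
    have e: "m + i - 1 = m + (i - 1)" using h by simp
    have "drop m w ! (i - 1) = w ! (m + (i - 1))" "drop m w ! i = w ! (m + i)" using h by auto
    then show "w ! (m + i - 1) < w ! (m + i)" unfolding e using h by simp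
  qed (use h in auto)
  then show "drop m w ! k < drop m w ! k'" using h by auto
qed

abbreviation lt :: "(nat \<times> nat) set" where "lt \<equiv> {(a, b). a < b}"

lemma trans_lt: "trans lt" by (auto simp: trans_def)

lemma lsd_unique:
  assumes "lsd p" "lsd q" "length p = length q" "desc p = desc q"
  shows "p = q"
proof (rule ccontr)
  assume ne: "p \<noteq> q"
  have hp: "\<forall>\<tau>. perm_word \<tau> \<and> length \<tau> = length p \<and> desc \<tau> = desc p \<longrightarrow> p = \<tau> \<or> (p, \<tau>) \<in> lexord lt"
    and hq: "\<forall>\<tau>. perm_word \<tau> \<and> length \<tau> = length q \<and> desc \<tau> = desc q \<longrightarrow> q = \<tau> \<or> (q, \<tau>) \<in> lexord lt"
    and pp: "perm_word p" and pq: "perm_word q"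
    using assms(1,2) unfolding lsd_def by auto
  have "p = q \<or> (p, q) \<in> lexord lt" using hp pq assms(3,4) by simp
  then have "(p, q) \<in> lexord lt" using ne by simp
  moreover have "q = p \<or> (q, p) \<in> lexord lt" using hq pp assms(3,4) by simp
  then have "(q, p) \<in> lexord lt" using ne by simp
  ultimately have "(p, p) \<in> lexord lt" using lexord_trans trans_lt by blast
  moreover have "(p, p) \<notin> lexord lt" by (rule lexord_irreflexive) auto
  ultimately show False by blast
qed

lemma set_drop_distinct: "distinct xs \<Longrightarrow> set (drop j xs) = set xs - set (take j xs)"
proof -
  assume d: "distinct xs"
  have "distinct (take j xs @ drop j xs)" using d by simp
  then have "set (take j xs) \<inter> set (drop j xs) = {}" unfolding distinct_append by blast
  moreover have "set xs = set (take j xs) \<union> set (drop j xs)"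
    by (metis append_take_drop_id set_append)
  ultimately show ?thesis by blast
qed

lemma gl_lex:
  assumes pp: "perm_word p" and pt: "perm_word t" and len: "length t = length p"
    and de: "desc t = desc p" and g: "gl p" and ne: "p \<noteq> t"
  shows "(p, t) \<in> lexord lt"
proof -
  define N where "N = length p"
  have dp: "distinct p" and dt: "distinct t" using pp pt by (auto simp: perm_word_def)
  have ex: "\<exists>j. j < N \<and> p ! j \<noteq> t ! j"
  proof (rule ccontr)
    assume "\<not> ?thesis"
    then have "p = t" by (intro nth_equalityI) (auto simp: len N_def)
    then show False using ne by simp
  qed
  define j where "j = (LEAST j. j < N \<and> p ! j \<noteq> t ! j)"
  have j: "j < N" "p ! j \<noteq> t ! j" using LeastI_ex[OF ex] unfolding j_def by auto
  have before: "p ! i = t ! i" if "i < j" for i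
  proof -
    have "\<not> (i < N \<and> p ! i \<noteq> t ! i)" using not_less_Least[of i] that unfolding j_def by blast
    then show ?thesis using that j(1) by auto
  qed
  have tk: "take j p = take j t"
    by (rule nth_take_lemma) (use j len before N_def in auto)
  define P where "P = (\<lambda>k. k = N - 1 \<or> p ! k < p ! Suc k)"
  have exe: "\<exists>k. j \<le> k \<and> P k" using j by (auto simp: P_def intro!: exI[of _ "N - 1"])
  define e where "e = (LEAST k. j \<le> k \<and> P k)"
  have e: "j \<le> e" "P e" using LeastI_ex[OF exe] unfolding e_def by auto
  have notP: "\<And>l. j \<le> l \<Longrightarrow> l < e \<Longrightarrow> \<not> P l"
    using not_less_Least unfolding e_def by blast
  have eN: "e < N"
  proof (rule ccontr)
    assume "\<not> e < N"
    then have "N - 1 < e" using j by auto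
    moreover have "j \<le> N - 1" using j by linarith
    ultimately have "\<not> P (N - 1)" using notP by blast
    then show False by (simp add: P_def)
  qed
  have stepd: "p ! l > p ! Suc l \<and> t ! l > t ! Suc l" if "j \<le> l" "l < e" for l
  proof -
    have "\<not> P l" using notP that by auto
    then have l1: "Suc l < N" and nl: "\<not> p ! l < p ! Suc l" using eN that by (auto simp: P_def)
    have "p ! l \<noteq> p ! Suc l" using dp l1 unfolding N_def by (simp add: nth_eq_iff_index_eq)
    then have "p ! l > p ! Suc l" using nl by simp
    then have "Suc l \<in> desc p" using l1 unfolding desc_def N_def by auto
    then have "Suc l \<in> desc t" using de by simp
    then show ?thesis using \<open>p ! l > p ! Suc l\<close> by (simp add: desc_def)
  qed
  have chain: "p ! (j + d) \<le> p ! j \<and> t ! (j + d) \<le> t ! j" if "j + d \<le> e" for d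
    using that
  proof (induction d)
    case (Suc d)
    then have "p ! (j + d) > p ! Suc (j + d) \<and> t ! (j + d) > t ! Suc (j + d)"
      by (intro stepd) auto
    with Suc show ?case by auto
  qed simp
  have chain': "p ! l \<le> p ! j \<and> t ! l \<le> t ! j" if "j \<le> l" "l \<le> e" for l
    using chain[of "l - j"] that by auto
  have after: "p ! l > p ! j" if "e < l" "l < N" for l
  proof -
    have "e \<noteq> N - 1" using that by auto
    then have "p ! e < p ! Suc e" using e(2) by (simp add: P_def)
    moreover have "Suc e < N" using that by auto
    moreover have gg: "\<And>i k k'. 0 < i \<Longrightarrow> i < length p \<Longrightarrow> p ! (i - 1) < p ! i \<Longrightarrow> k < i \<Longrightarrow> i \<le> k'
        \<Longrightarrow> k' < length p \<Longrightarrow> p ! k < p ! k'" using g unfolding gl_def by blast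
    ultimately show ?thesis using gg[of "Suc e" j l] e(1) that unfolding N_def by auto
  qed
  define A where "A = {x \<in> set (drop j p). x \<le> p ! j}"
  have A: "A = (\<lambda>l. p ! l) ` {j..e}"
  proof
    show "A \<subseteq> (\<lambda>l. p ! l) ` {j..e}"
    proof
      fix x assume "x \<in> A"
      then obtain i where i: "i < length (drop j p)" "x = drop j p ! i" "x \<le> p ! j"
        unfolding A_def by (auto simp: in_set_conv_nth)
      then have x: "x = p ! (j + i)" "j + i < N" using j N_def by auto
      have "j + i \<le> e" using after[of "j + i"] x i by (meson leI not_le)
      then show "x \<in> (\<lambda>l. p ! l) ` {j..e}" using x by auto
    qed
  next
    show "(\<lambda>l. p ! l) ` {j..e} \<subseteq> A"
    proof
      fix x assume "x \<in> (\<lambda>l. p ! l) ` {j..e}"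
      then obtain l where l: "j \<le> l" "l \<le> e" "x = p ! l" by auto
      have "drop j p ! (l - j) = p ! l" using l eN N_def by auto
      moreover have "l - j < length (drop j p)" using l eN N_def by auto
      ultimately have "x \<in> set (drop j p)" using l by (metis nth_mem)
      then show "x \<in> A" using chain' l unfolding A_def by auto
    qed
  qed
  have cardA: "card A = Suc e - j"
    unfolding A by (subst card_image) (use dp eN N_def in \<open>auto intro!: inj_on_nth\<close>)
  define B where "B = (\<lambda>l. t ! l) ` {j..e}"
  have cardB: "card B = Suc e - j"
    unfolding B_def by (subst card_image) (use dt eN N_def len in \<open>auto intro!: inj_on_nth\<close>)
  have sd: "set (drop j t) = set (drop j p)"
    using set_drop_distinct[OF dp, of j] set_drop_distinct[OF dt, of j] tk pp pt len
    by (simp add: perm_word_def)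
  have "\<not> t ! j < p ! j"
  proof
    assume lt: "t ! j < p ! j"
    have "B \<subseteq> A - {p ! j}"
    proof
      fix x assume "x \<in> B"
      then obtain l where l: "j \<le> l" "l \<le> e" "x = t ! l" unfolding B_def by auto
      have "drop j t ! (l - j) = t ! l" using l eN N_def len by auto
      moreover have "l - j < length (drop j t)" using l eN N_def len by auto
      ultimately have "x \<in> set (drop j t)" using l by (metis nth_mem)
      then have "x \<in> set (drop j p)" using sd by simp
      moreover have "x \<le> t ! j" using chain' l by auto
      ultimately show "x \<in> A - {p ! j}" using lt unfolding A_def by auto
    qed
    then have "card B \<le> card (A - {p ! j})" by (intro card_mono) (auto simp: A)
    also have "\<dots> = card A - 1"
      using e(1) by (subst card_Diff_singleton) (auto simp: A)
    finally show False using cardA cardB e(1) by simp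
  qed
  then have "p ! j < t ! j" using j(2) by simp
  then show ?thesis unfolding lexord_take_index_conv using j tk len N_def by auto
qed

lemma gl_lsd: "perm_word p \<Longrightarrow> gl p \<Longrightarrow> lsd p"
  unfolding lsd_def using gl_lex by blast

definition run :: "nat set \<Rightarrow> nat \<Rightarrow> nat" where
  "run D k = card {i \<in> {1..k}. i \<notin> D}"

definition ckey :: "nat \<Rightarrow> nat set \<Rightarrow> nat \<Rightarrow> nat" where
  "ckey N D k = run D k * (N + 1) + (N - k)"

definition canon :: "nat \<Rightarrow> nat set \<Rightarrow> nat list" where
  "canon N D = st (map (ckey N D) [0..<N])"

lemma run_mono: "k \<le> k' \<Longrightarrow> run D k \<le> run D k'"
  unfolding run_def by (intro card_mono) auto

lemma run_Suc: "run D (Suc k) = run D k + (if Suc k \<in> D then 0 else 1)"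
proof -
  have "{i \<in> {1..Suc k}. i \<notin> D} = {i \<in> {1..k}. i \<notin> D} \<union> (if Suc k \<in> D then {} else {Suc k})"
    by (auto simp: le_Suc_eq)
  then show ?thesis unfolding run_def by (auto simp: card_insert_if)
qed

lemma ckey_less_run: "run D k < run D k' \<Longrightarrow> k \<le> N \<Longrightarrow> ckey N D k < ckey N D k'"
proof -
  assume a: "run D k < run D k'" "k \<le> N"
  have "ckey N D k \<le> run D k * (N + 1) + N" unfolding ckey_def by simp
  also have "\<dots> < (run D k + 1) * (N + 1)" by simp
  also have "\<dots> \<le> run D k' * (N + 1)" using a by (intro mult_right_mono) auto
  also have "\<dots> \<le> ckey N D k'" unfolding ckey_def by simp
  finally show ?thesis .
qed

lemma ckey_step: "Suc k < N \<Longrightarrow> ckey N D k > ckey N D (Suc k) \<longleftrightarrow> Suc k \<in> D"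
proof -
  assume a: "Suc k < N"
  show ?thesis
  proof (cases "Suc k \<in> D")
    case True
    then have "run D (Suc k) = run D k" by (simp add: run_Suc)
    then show ?thesis using a True unfolding ckey_def by simp
  next
    case False
    then have "run D k < run D (Suc k)" by (simp add: run_Suc)
    then have "ckey N D k < ckey N D (Suc k)" using a by (intro ckey_less_run) auto
    then show ?thesis using False by simp
  qed
qed

lemma ckey_inj: "k < N \<Longrightarrow> k' < N \<Longrightarrow> ckey N D k = ckey N D k' \<Longrightarrow> k = k'"
proof -
  assume a: "k < N" "k' < N" "ckey N D k = ckey N D k'"
  show "k = k'"
  proof (rule ccontr)
    assume "k \<noteq> k'"
    then consider "k < k'" | "k' < k" by linarith
    then show False
    proof cases
      case 1
      then have r: "run D k \<le> run D k'" by (simp add: run_mono)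
      show False
      proof (cases "run D k = run D k'")
        case True then show False using a 1 unfolding ckey_def by simp
      next
        case False then show False using ckey_less_run[of D k k' N] r a by simp
      qed
    next
      case 2
      then have r: "run D k' \<le> run D k" by (simp add: run_mono)
      show False
      proof (cases "run D k = run D k'")
        case True then show False using a 2 unfolding ckey_def by simp
      next
        case False then show False using ckey_less_run[of D k' k N] r a by simp
      qed
    qed
  qed
qed

lemma canon_props:
  shows "perm_word (canon N D)" "length (canon N D) = N"
    "desc (canon N D) = {i \<in> D. 1 \<le> i \<and> i < N}" "gl (canon N D)"
proof -
  define w where "w = map (ckey N D) [0..<N]"
  have wn: "\<And>k. k < N \<Longrightarrow> w ! k = ckey N D k" by (simp add: w_def)
  have dw: "distinct w"
    unfolding w_def distinct_map using ckey_inj by (auto simp: inj_on_def)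
  show "perm_word (canon N D)" unfolding canon_def w_def[symmetric] using dw by (rule perm_word_st)
  show "length (canon N D) = N" by (simp add: canon_def)
  have "desc w = {i \<in> D. 1 \<le> i \<and> i < N}"
  proof (rule set_eqI)
    fix i
    show "i \<in> desc w \<longleftrightarrow> i \<in> {i \<in> D. 1 \<le> i \<and> i < N}"
    proof (cases "1 \<le> i \<and> i < N")
      case True
      then obtain k where k: "i = Suc k" by (cases i) auto
      then show ?thesis using True ckey_step[of k N D] wn[of k] wn[of i]
        unfolding desc_def by (auto simp: w_def)
    qed (auto simp: desc_def w_def)
  qed
  then show "desc (canon N D) = {i \<in> D. 1 \<le> i \<and> i < N}"
    unfolding canon_def w_def[symmetric] desc_st .
  have "gl w"
    unfolding gl_def
  proof (intro allI impI)
    fix i k k'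
    assume h: "0 < i \<and> i < length w \<and> w ! (i - 1) < w ! i \<and> k < i \<and> i \<le> k' \<and> k' < length w"
    then obtain l where l: "i = Suc l" by (cases i) auto
    have lw: "length w = N" by (simp add: w_def)
    have "\<not> ckey N D l > ckey N D (Suc l)" using h l wn[of l] wn[of "Suc l"] lw by auto
    then have "Suc l \<notin> D" using ckey_step[of l N D] h l lw by auto
    then have "run D l < run D (Suc l)" by (simp add: run_Suc)
    moreover have "run D k \<le> run D l" "run D (Suc l) \<le> run D k'" using h l by (auto intro: run_mono)
    ultimately have "run D k < run D k'" by linarith
    then have "ckey N D k < ckey N D k'" using h lw by (intro ckey_less_run) auto
    then show "w ! k < w ! k'" using h lw wn by auto
  qed
  then show "gl (canon N D)" unfolding canon_def w_def[symmetric] gl_st .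
qed

lemma desc_subset: "desc w \<subseteq> {i. 1 \<le> i \<and> i < length w}"
  unfolding desc_def by auto

lemma lsd_gl: "lsd p \<longleftrightarrow> perm_word p \<and> gl p"
proof
  assume l: "lsd p"
  then have pp: "perm_word p" by (simp add: lsd_def)
  define c where "c = canon (length p) (desc p)"
  have "lsd c" unfolding c_def using canon_props by (intro gl_lsd) auto
  moreover have "desc c = desc p" unfolding c_def canon_props using desc_subset[of p] by auto
  moreover have "length p = length c" unfolding c_def canon_props ..
  ultimately have "p = c" using l lsd_unique[of p c] by blast
  moreover have "gl c" unfolding c_def by (rule canon_props)
  ultimately show "perm_word p \<and> gl p" using pp by simp
next
  assume "perm_word p \<and> gl p"
  then show "lsd p" using gl_lsd by simp
qed

lemma sl_eq: "finite A \<Longrightarrow> sorted_wrt (<) l \<Longrightarrow> set l = A \<Longrightarrow> sorted_list_of_set A = l"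
proof -
  assume a: "finite A" "sorted_wrt (<) l" "set l = A"
  then have "distinct l" by (simp add: strict_sorted_iff)
  then have "length l = card A" using a distinct_card[of l] by simp
  then show ?thesis using sorted_list_of_set_unique[of A l] a by simp
qed

fun cmp :: "nat \<Rightarrow> nat list \<Rightarrow> nat \<Rightarrow> nat list" where
  "cmp p [] n = [n - p]"
| "cmp p (d # ds) n = (d - p) # cmp d ds n"

lemma cmp_zip: "map (\<lambda>(a, b). a - b) (zip (ds @ [n]) (p # ds)) = cmp p ds n"
  by (induction ds arbitrary: p) auto

lemma comp_cmp: "comp n D = cmp 0 (sorted_list_of_set D) n"
  unfolding comp_def Let_def cmp_zip ..

lemma cmp_ne: "cmp p ds n \<noteq> []" by (cases ds) auto

lemma cmp_append: "cmp p (ds1 @ m # ds2) N = cmp p ds1 m @ cmp m ds2 N"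
  by (induction ds1 arbitrary: p) auto

lemma cmp_shift: "cmp (p + m) (map (\<lambda>x. x + m) ds) (n + m) = cmp p ds n"
  by (induction ds arbitrary: p) auto

lemma cmp_merge:
  "p \<le> m \<Longrightarrow> \<forall>x\<in>set ds1. x \<le> m \<Longrightarrow> \<forall>x\<in>set ds2. m \<le> x \<Longrightarrow> m \<le> N \<Longrightarrow>
   cmp p (ds1 @ ds2) N = merge (cmp p ds1 m) (cmp m ds2 N)"
proof (induction ds1 arbitrary: p)
  case Nil
  then show ?case by (cases ds2) (auto simp: merge_def)
next
  case (Cons d r)
  obtain c cs where c: "cmp d r m = c # cs" using cmp_ne by (cases "cmp d r m") auto
  have "cmp d (r @ ds2) N = merge (cmp d r m) (cmp m ds2 N)" using Cons by auto
  then show ?case using c by (simp add: merge_def)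
qed

lemma cmp_pos: "sorted_wrt (<) (p # ds) \<Longrightarrow> \<forall>x\<in>set ds. x < n \<Longrightarrow> p < n \<Longrightarrow> \<forall>x\<in>set (cmp p ds n). x > 0"
  by (induction ds arbitrary: p) auto

lemma comp_pos: "D \<subseteq> {1..<n} \<Longrightarrow> 0 < n \<Longrightarrow> \<forall>x\<in>set (comp n D). x > 0"
proof -
  assume a: "D \<subseteq> {1..<n}" and n: "0 < n"
  have "finite D" using a finite_subset by blast
  show ?thesis unfolding comp_cmp
    using a n by (intro cmp_pos) (use a \<open>finite D\<close> in \<open>auto simp: strict_sorted_list_of_set[simplified]\<close>)
qed

lemma comp_ne: "comp n D \<noteq> []" unfolding comp_cmp by (rule cmp_ne)

lemma comp_split:
  assumes D1: "D1 \<subseteq> {1..<m}" and D2: "D2 \<subseteq> {1..<n}"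
  shows "comp (m + n) (D1 \<union> {m} \<union> (\<lambda>x. x + m) ` D2) = comp m D1 @ comp n D2"
    and "comp (m + n) (D1 \<union> (\<lambda>x. x + m) ` D2) = merge (comp m D1) (comp n D2)"
proof -
  have f1: "finite D1" and f2: "finite D2" using D1 D2 finite_subset by auto
  define l1 where "l1 = sorted_list_of_set D1"
  define l2 where "l2 = sorted_list_of_set D2"
  have s1: "sorted_wrt (<) l1" "set l1 = D1" unfolding l1_def using f1
    by (auto simp: strict_sorted_list_of_set[simplified])
  have s2: "sorted_wrt (<) l2" "set l2 = D2" unfolding l2_def using f2
    by (auto simp: strict_sorted_list_of_set[simplified])
  have s2': "sorted_wrt (<) (map (\<lambda>x. x + m) l2)" using s2 by (simp add: sorted_wrt_map)
  have b1: "\<forall>x\<in>set l1. x < m" using s1 D1 by auto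
  have b2: "\<forall>x\<in>set (map (\<lambda>x. x + m) l2). m < x" using s2 D2 by auto
  have "sorted_list_of_set (D1 \<union> {m} \<union> (\<lambda>x. x + m) ` D2) = l1 @ m # map (\<lambda>x. x + m) l2"
  proof (rule sl_eq)
    show "sorted_wrt (<) (l1 @ m # map (\<lambda>x. x + m) l2)"
      using s1 s2' b1 b2 unfolding sorted_wrt_append by (auto intro: less_trans)
  qed (use f1 f2 s1 s2 in auto)
  then show "comp (m + n) (D1 \<union> {m} \<union> (\<lambda>x. x + m) ` D2) = comp m D1 @ comp n D2"
    unfolding comp_cmp l1_def[symmetric] l2_def[symmetric]
    using cmp_shift[of 0 m l2 n] cmp_append[of 0 l1 m "map (\<lambda>x. x + m) l2" "m + n"] by (simp add: add.commute)
  have "sorted_list_of_set (D1 \<union> (\<lambda>x. x + m) ` D2) = l1 @ map (\<lambda>x. x + m) l2"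
  proof (rule sl_eq)
    show "sorted_wrt (<) (l1 @ map (\<lambda>x. x + m) l2)"
      using s1 s2' b1 b2 unfolding sorted_wrt_append by (auto intro: less_trans)
  qed (use f1 f2 s1 s2 in auto)
  moreover have "cmp 0 (l1 @ map (\<lambda>x. x + m) l2) (m + n) = merge (cmp 0 l1 m) (cmp m (map (\<lambda>x. x + m) l2) (m + n))"
    by (rule cmp_merge) (use b1 b2 in auto)
  ultimately show "comp (m + n) (D1 \<union> (\<lambda>x. x + m) ` D2) = merge (comp m D1) (comp n D2)"
    unfolding comp_cmp l1_def[symmetric] l2_def[symmetric]
    using cmp_shift[of 0 m l2 n] by (simp add: add.commute)
qed

definition Sh :: "nat list \<Rightarrow> nat list \<Rightarrow> nat list set" where
  "Sh s t = {p. perm_word p \<and> length p = length s + length t \<and> st (take (length s) p) = s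
      \<and> st (drop (length s) p) = t}"

lemma finite_perm_len: "finite {p. perm_word p \<and> length p = N}"
proof -
  have "{p. perm_word p \<and> length p = N} \<subseteq> {xs. set xs \<subseteq> {1..N} \<and> length xs = N}"
    by (auto simp: perm_word_def)
  then show ?thesis using finite_lists_length_eq[of "{1..N}" N] by (auto intro: finite_subset)
qed

lemma finite_Sh: "finite (Sh s t)"
  by (rule finite_subset[OF _ finite_perm_len[of "length s + length t"]]) (auto simp: Sh_def)

lemma psi_word_lsd: "lsd p \<Longrightarrow> p \<noteq> [] \<Longrightarrow> psi_word p = R (comp (length p) (desc p))"
  by (simp add: psi_word_def)

lemma psi_word_nonlsd: "\<not> lsd p \<Longrightarrow> p \<noteq> [] \<Longrightarrow> psi_word p = (\<lambda>w. 0)"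
  by (simp add: psi_word_def)

lemma desc_canon: "D \<subseteq> {1..<N} \<Longrightarrow> desc (canon N D) = D"
  using canon_props(3)[of N D] by auto

lemma lsd_canon: "lsd (canon N D)"
  using canon_props gl_lsd by blast

lemma psi_word_canon: "0 < N \<Longrightarrow> D \<subseteq> {1..<N} \<Longrightarrow> psi_word (canon N D) = R (comp N D)"
proof -
  assume a: "0 < N" "D \<subseteq> {1..<N}"
  have "canon N D \<noteq> []" using canon_props(2)[of N D] a by auto
  then show ?thesis using psi_word_lsd[OF lsd_canon] desc_canon[OF a(2)] canon_props(2) by simp
qed

lemma desc_perm_sub: "desc p \<subseteq> {1..<length p}"
  unfolding desc_def by auto

lemma Sh_desc:
  assumes "p \<in> Sh s t"
  shows "desc p - {length s} = desc s \<union> (\<lambda>x. x + length s) ` desc t"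
proof -
  let ?m = "length s"
  have tk: "desc s = {i \<in> desc p. i < ?m}"
    using assms desc_take[of ?m p] desc_st[of "take ?m p"] unfolding Sh_def by auto
  have dr: "desc t = {i. 1 \<le> i \<and> i + ?m \<in> desc p}"
    using assms desc_drop[of ?m p] desc_st[of "drop ?m p"] unfolding Sh_def by auto
  show ?thesis
  proof (rule set_eqI)
    fix i
    show "i \<in> desc p - {?m} \<longleftrightarrow> i \<in> desc s \<union> (\<lambda>x. x + ?m) ` desc t"
    proof
      assume i: "i \<in> desc p - {?m}"
      show "i \<in> desc s \<union> (\<lambda>x. x + ?m) ` desc t"
      proof (cases "i < ?m")
        case True
        then have "i \<in> desc s" using i unfolding tk by blast
        then show ?thesis by blast
      next
        case False
        then have ge: "1 \<le> i - ?m" and e: "i = (i - ?m) + ?m" using i by auto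
        have "(i - ?m) + ?m \<in> desc p" using i e by simp
        then have "i - ?m \<in> desc t" using ge unfolding dr by blast
        then show ?thesis using e by blast
      qed
    next
      assume "i \<in> desc s \<union> (\<lambda>x. x + ?m) ` desc t"
      then consider "i \<in> desc s" | x where "x \<in> desc t" "i = x + ?m" by blast
      then show "i \<in> desc p - {?m}"
      proof cases
        case 1 then show ?thesis unfolding tk by simp
      next
        case 2
        then have "1 \<le> x" "x + ?m \<in> desc p" unfolding dr by auto
        then show ?thesis using 2 by simp
      qed
    qed
  qed
qed

lemma canon_in_Sh:
  assumes ls: "lsd s" and lt: "lsd t"
    and D: "D \<subseteq> {1..<length s + length t}"
    and D1: "{i \<in> D. i < length s} = desc s"
    and D2: "{i. 1 \<le> i \<and> i + length s \<in> D} = desc t"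
  shows "canon (length s + length t) D \<in> Sh s t"
proof -
  let ?m = "length s" and ?n = "length t"
  define c where "c = canon (?m + ?n) D"
  have pc: "perm_word c" "length c = ?m + ?n" "gl c" "desc c = D"
    unfolding c_def using canon_props desc_canon[OF D] by auto
  have dc: "distinct c" using pc by (simp add: perm_word_def)
  have "lsd (st (take ?m c))"
    using pc dc by (intro gl_lsd perm_word_st) (auto simp: gl_st gl_take)
  moreover have "desc (st (take ?m c)) = desc s"
    unfolding desc_st desc_take pc D1 ..
  ultimately have 1: "st (take ?m c) = s"
    using lsd_unique[of "st (take ?m c)" s] ls pc by simp
  have "lsd (st (drop ?m c))"
    using pc dc by (intro gl_lsd perm_word_st) (auto simp: gl_st gl_drop)
  moreover have "desc (st (drop ?m c)) = desc t"
    unfolding desc_st desc_drop pc D2 ..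
  ultimately have 2: "st (drop ?m c) = t"
    using lsd_unique[of "st (drop ?m c)" t] lt pc by simp
  show ?thesis using pc 1 2 unfolding Sh_def c_def by simp
qed

lemma lsd_perm: "lsd p \<Longrightarrow> perm_word p" by (simp add: lsd_def)

lemma Sh_lsd:
  assumes p: "p \<in> Sh s t" and l: "lsd p"
  shows "lsd s" "lsd t"
proof -
  let ?m = "length s"
  have pp: "perm_word p" "gl p" using l lsd_gl by auto
  then have dp: "distinct p" by (simp add: perm_word_def)
  have "st (take ?m p) = s" "st (drop ?m p) = t" using p by (auto simp: Sh_def)
  moreover have "lsd (st (take ?m p))" using pp dp by (intro gl_lsd perm_word_st) (auto simp: gl_st gl_take)
  moreover have "lsd (st (drop ?m p))" using pp dp by (intro gl_lsd perm_word_st) (auto simp: gl_st gl_drop)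
  ultimately show "lsd s" "lsd t" by auto
qed

lemma key_nonempty:
  assumes ps: "perm_word s" and pt: "perm_word t" and m: "length s > 0" and n: "length t > 0"
  shows "(\<lambda>w. \<Sum>p\<in>Sh s t. psi_word p w) = ns_mult (psi_word s) (psi_word t)"
proof -
  let ?m = "length s" and ?n = "length t"
  define D1 where "D1 = desc s \<union> (\<lambda>x. x + ?m) ` desc t"
  define D2 where "D2 = desc s \<union> {?m} \<union> (\<lambda>x. x + ?m) ` desc t"
  define c1 where "c1 = canon (?m + ?n) D1"
  define c2 where "c2 = canon (?m + ?n) D2"
  have ds: "desc s \<subseteq> {1..<?m}" and dt: "desc t \<subseteq> {1..<?n}" using desc_perm_sub by auto
  have D1s: "D1 \<subseteq> {1..<?m + ?n}" using ds dt unfolding D1_def by auto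
  have D2s: "D2 \<subseteq> {1..<?m + ?n}" using ds dt m n unfolding D2_def by (auto simp: Suc_le_eq)
  have mD1: "?m \<notin> D1" using ds dt unfolding D1_def by auto
  have D2D1: "D2 = insert ?m D1" unfolding D1_def D2_def by auto
  have c12: "c1 \<noteq> c2"
  proof
    assume "c1 = c2"
    then have "D1 = D2" using desc_canon[OF D1s] desc_canon[OF D2s] unfolding c1_def c2_def by metis
    then show False using mD1 D2D1 by auto
  qed
  have sum0: "(\<Sum>p\<in>Sh s t. psi_word p w) = (\<Sum>p\<in>{p \<in> Sh s t. lsd p}. psi_word p w)" for w
  proof (rule sum.mono_neutral_right)
    show "\<forall>p\<in>Sh s t - {p \<in> Sh s t. lsd p}. psi_word p w = 0"
    proof
      fix p assume "p \<in> Sh s t - {p \<in> Sh s t. lsd p}"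
      then have "p \<in> Sh s t" "\<not> lsd p" by auto
      moreover then have "p \<noteq> []" using m by (auto simp: Sh_def)
      ultimately show "psi_word p w = 0" using psi_word_nonlsd by simp
    qed
  qed (auto simp: finite_Sh)
  show ?thesis
  proof (cases "lsd s \<and> lsd t")
    case True
    have in1: "c1 \<in> Sh s t" unfolding c1_def
      by (rule canon_in_Sh) (use True D1s ds dt in \<open>auto simp: D1_def\<close>)
    have in2: "c2 \<in> Sh s t" unfolding c2_def
      by (rule canon_in_Sh) (use True D2s ds dt in \<open>auto simp: D2_def\<close>)
    have "{p \<in> Sh s t. lsd p} = {c1, c2}"
    proof
      show "{c1, c2} \<subseteq> {p \<in> Sh s t. lsd p}" using in1 in2 lsd_canon unfolding c1_def c2_def by auto
      show "{p \<in> Sh s t. lsd p} \<subseteq> {c1, c2}"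
      proof
        fix p assume "p \<in> {p \<in> Sh s t. lsd p}"
        then have p: "p \<in> Sh s t" "lsd p" by auto
        have lp: "length p = ?m + ?n" using p by (auto simp: Sh_def)
        have dsub: "desc p \<subseteq> {1..<?m + ?n}" using desc_perm_sub[of p] lp by simp
        have "desc p = D1 \<or> desc p = D2"
          using Sh_desc[OF p(1)] unfolding D1_def[symmetric] D2D1 by blast
        then show "p \<in> {c1, c2}"
        proof
          assume "desc p = D1"
          then have "p = c1" using lsd_unique[OF p(2) lsd_canon, of "?m + ?n" D1] lp
            desc_canon[OF D1s] canon_props(2) unfolding c1_def by simp
          then show ?thesis by simp
        next
          assume "desc p = D2"
          then have "p = c2" using lsd_unique[OF p(2) lsd_canon, of "?m + ?n" D2] lp
            desc_canon[OF D2s] canon_props(2) unfolding c2_def by simp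
          then show ?thesis by simp
        qed
      qed
    qed
    then have "(\<lambda>w. \<Sum>p\<in>Sh s t. psi_word p w) = (\<lambda>w. psi_word c1 w + psi_word c2 w)"
      using sum0 c12 by auto
    also have "\<dots> = R (merge (comp ?m (desc s)) (comp ?n (desc t))) + R (comp ?m (desc s) @ comp ?n (desc t))"
    proof -
      have e1: "psi_word c1 = R (comp (?m + ?n) D1)" unfolding c1_def using m D1s by (intro psi_word_canon) auto
      have e2: "psi_word c2 = R (comp (?m + ?n) D2)" unfolding c2_def using m D2s by (intro psi_word_canon) auto
      show ?thesis unfolding e1 e2 using comp_split[OF ds dt] unfolding D1_def D2_def by (simp add: plus_fun_def)
    qed
    also have "\<dots> = ns_mult (R (comp ?m (desc s))) (R (comp ?n (desc t)))"
      by (subst R_prod) (use comp_pos[OF ds m] comp_pos[OF dt n] comp_ne in auto)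
    also have "\<dots> = ns_mult (psi_word s) (psi_word t)"
      using True m n psi_word_lsd by auto
    finally show ?thesis .
  next
    case False
    have "{p \<in> Sh s t. lsd p} = {}" using Sh_lsd False by blast
    then have "(\<lambda>w. \<Sum>p\<in>Sh s t. psi_word p w) = (\<lambda>w. 0)" unfolding sum0 by (simp only: sum.empty)
    moreover have "psi_word s = (\<lambda>w. 0) \<or> psi_word t = (\<lambda>w. 0)" using False m n psi_word_nonlsd by auto
    ultimately show ?thesis by (auto simp: zero_fun_def[symmetric])
  qed
qed

lemma st_Nil[simp]: "st [] = []" by (simp add: st_def)

lemma key:
  assumes ps: "perm_word s" and pt: "perm_word t"
  shows "(\<lambda>w. \<Sum>p\<in>Sh s t. psi_word p w) = ns_mult (psi_word s) (psi_word t)"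
proof (cases "s = []")
  case True
  have "Sh s t = {t}" using True pt st_perm_word unfolding Sh_def by (auto simp: st_perm_word)
  then show ?thesis using True by (simp add: psi_word_def)
next
  case sne: False
  show ?thesis
  proof (cases "t = []")
    case True
    have "Sh s t = {s}" using True ps unfolding Sh_def by (auto simp: st_perm_word)
    then show ?thesis using True by (simp add: psi_word_def)
  next
    case False
    then show ?thesis using key_nonempty[OF ps pt] sne by simp
  qed
qed

definition supp :: "(nat list \<Rightarrow> int) \<Rightarrow> nat list set" where
  "supp F = {w. F w \<noteq> 0}"

lemma psi_gen: "finite A \<Longrightarrow> supp F \<subseteq> A \<Longrightarrow> psi F = (\<lambda>w. \<Sum>s\<in>A. F s * psi_word s w)"
  unfolding psi_def supp_def by (intro ext sum.mono_neutral_left) auto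

lemma MPR_finite: "F \<in> MPR \<Longrightarrow> finite (supp F)"
  by (simp add: MPR_def supp_def)

lemma MPR_perm: "F \<in> MPR \<Longrightarrow> s \<in> supp F \<Longrightarrow> perm_word s"
  by (simp add: MPR_def supp_def)

lemma psi_add: "F \<in> MPR \<Longrightarrow> G \<in> MPR \<Longrightarrow> psi (\<lambda>w. F w + G w) = (\<lambda>w. psi F w + psi G w)"
proof -
  assume F: "F \<in> MPR" and G: "G \<in> MPR"
  let ?A = "supp F \<union> supp G"
  have fA: "finite ?A" using F G MPR_finite by auto
  have "psi (\<lambda>w. F w + G w) = (\<lambda>w. \<Sum>s\<in>?A. (F s + G s) * psi_word s w)"
    by (rule psi_gen[OF fA]) (auto simp: supp_def)
  also have "\<dots> = (\<lambda>w. (\<Sum>s\<in>?A. F s * psi_word s w) + (\<Sum>s\<in>?A. G s * psi_word s w))"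
    by (simp add: distrib_right sum.distrib)
  also have "\<dots> = (\<lambda>w. psi F w + psi G w)"
    using psi_gen[OF fA, of F] psi_gen[OF fA, of G] by auto
  finally show ?thesis .
qed

lemma psi_basis: "psi (mpr_basis s) = psi_word s"
proof -
  have "psi (mpr_basis s) = (\<lambda>w. \<Sum>x\<in>{s}. mpr_basis s x * psi_word x w)"
    by (rule psi_gen) (auto simp: supp_def mpr_basis_def)
  then show ?thesis by (simp add: mpr_basis_def)
qed

lemma psi_one: "psi mpr_one = ns_one"
proof -
  have e: "mpr_one = mpr_basis []" by (simp add: mpr_one_def mpr_basis_def fun_eq_iff)
  show ?thesis by (subst e) (simp add: psi_basis psi_word_def)
qed

lemma length_st_take: "k \<le> length p \<Longrightarrow> length (st (take k p)) = k" by simp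

lemma mpr_mult_coeff:
  assumes F: "F \<in> MPR" and G: "G \<in> MPR" and p: "perm_word p"
  shows "mpr_mult F G p = (\<Sum>x\<in>{x \<in> supp F \<times> supp G. p \<in> Sh (fst x) (snd x)}. F (fst x) * G (snd x))"
proof -
  let ?K = "{k \<in> {..length p}. st (take k p) \<in> supp F \<and> st (drop k p) \<in> supp G}"
  have "mpr_mult F G p = (\<Sum>k\<in>{..length p}. F (st (take k p)) * G (st (drop k p)))"
    using p by (simp add: mpr_mult_def)
  also have "\<dots> = (\<Sum>k\<in>?K. F (st (take k p)) * G (st (drop k p)))"
    by (rule sum.mono_neutral_right) (auto simp: supp_def)
  also have "\<dots> = (\<Sum>x\<in>{x \<in> supp F \<times> supp G. p \<in> Sh (fst x) (snd x)}. F (fst x) * G (snd x))"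
  proof (rule sum.reindex_bij_witness[of _ "\<lambda>x. length (fst x)" "\<lambda>k. (st (take k p), st (drop k p))"])
    fix a assume "a \<in> {x \<in> supp F \<times> supp G. p \<in> Sh (fst x) (snd x)}"
    then obtain s t where a: "a = (s, t)" "s \<in> supp F" "t \<in> supp G" "p \<in> Sh s t" by auto
    then show "(st (take (length (fst a)) p), st (drop (length (fst a)) p)) = a"
      by (auto simp: Sh_def)
    show "length (fst a) \<in> ?K" using a by (auto simp: Sh_def)
  next
    fix k assume k: "k \<in> ?K"
    then show "length (fst (st (take k p), st (drop k p))) = k" by auto
    show "(st (take k p), st (drop k p)) \<in> {x \<in> supp F \<times> supp G. p \<in> Sh (fst x) (snd x)}"
      using k p by (auto simp: Sh_def perm_word_def)
  qed auto
  finally show ?thesis .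
qed

lemma psi_mult:
  assumes F: "F \<in> MPR" and G: "G \<in> MPR"
  shows "psi (mpr_mult F G) = ns_mult (psi F) (psi G)"
proof
  fix w
  let ?P = "supp F \<times> supp G"
  let ?T = "\<Union>x\<in>?P. Sh (fst x) (snd x)"
  have fP: "finite ?P" using F G MPR_finite by auto
  have fT: "finite ?T" using fP finite_Sh by auto
  have permT: "perm_word p" if "p \<in> ?T" for p using that by (auto simp: Sh_def)
  have coeff: "mpr_mult F G p = (\<Sum>x\<in>{x \<in> ?P. p \<in> Sh (fst x) (snd x)}. F (fst x) * G (snd x))"
    if "perm_word p" for p
    by (rule mpr_mult_coeff[OF F G that])
  have suppT: "supp (mpr_mult F G) \<subseteq> ?T"
  proof
    fix p assume "p \<in> supp (mpr_mult F G)"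
    then have nz: "mpr_mult F G p \<noteq> 0" by (simp add: supp_def)
    then have pp: "perm_word p" by (simp add: mpr_mult_def split: if_splits)
    have "{x \<in> ?P. p \<in> Sh (fst x) (snd x)} \<noteq> {}"
    proof
      assume e: "{x \<in> ?P. p \<in> Sh (fst x) (snd x)} = {}"
      have "mpr_mult F G p = 0" unfolding coeff[OF pp] e by simp
      then show False using nz by simp
    qed
    then show "p \<in> ?T" by auto
  qed
  have "psi (mpr_mult F G) w = (\<Sum>p\<in>?T. mpr_mult F G p * psi_word p w)"
    using psi_gen[OF fT suppT] by simp
  also have "\<dots> = (\<Sum>p\<in>?T. \<Sum>x\<in>?P. if p \<in> Sh (fst x) (snd x) then F (fst x) * G (snd x) * psi_word p w else 0)"
  proof (rule sum.cong[OF refl])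
    fix p assume "p \<in> ?T"
    then have pp: "perm_word p" by (rule permT)
    show "mpr_mult F G p * psi_word p w = (\<Sum>x\<in>?P. if p \<in> Sh (fst x) (snd x) then F (fst x) * G (snd x) * psi_word p w else 0)"
      unfolding coeff[OF pp] sum_distrib_right by (rule sum.inter_filter[OF fP])
  qed
  also have "\<dots> = (\<Sum>x\<in>?P. \<Sum>p\<in>?T. if p \<in> Sh (fst x) (snd x) then F (fst x) * G (snd x) * psi_word p w else 0)"
    by (rule sum.swap)
  also have "\<dots> = (\<Sum>x\<in>?P. F (fst x) * G (snd x) * (\<Sum>p\<in>Sh (fst x) (snd x). psi_word p w))"
  proof (rule sum.cong[OF refl])
    fix x assume x: "x \<in> ?P"
    have e: "{p \<in> ?T. p \<in> Sh (fst x) (snd x)} = Sh (fst x) (snd x)" using x by blast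
    have "(\<Sum>p\<in>?T. if p \<in> Sh (fst x) (snd x) then F (fst x) * G (snd x) * psi_word p w else 0) =
       (\<Sum>p\<in>{p \<in> ?T. p \<in> Sh (fst x) (snd x)}. F (fst x) * G (snd x) * psi_word p w)"
      by (rule sum.inter_filter[OF fT, symmetric])
    also have "\<dots> = (\<Sum>p\<in>Sh (fst x) (snd x). F (fst x) * G (snd x) * psi_word p w)"
      unfolding e ..
    finally show "(\<Sum>p\<in>?T. if p \<in> Sh (fst x) (snd x) then F (fst x) * G (snd x) * psi_word p w else 0) =
        F (fst x) * G (snd x) * (\<Sum>p\<in>Sh (fst x) (snd x). psi_word p w)"
      by (simp add: sum_distrib_left)
  qed
  also have "\<dots> = (\<Sum>x\<in>?P. F (fst x) * G (snd x) * ns_mult (psi_word (fst x)) (psi_word (snd x)) w)"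
  proof (rule sum.cong[OF refl])
    fix x assume x: "x \<in> ?P"
    then have "perm_word (fst x)" "perm_word (snd x)" using F G MPR_perm by auto
    from fun_cong[OF key[OF this], of w] show "F (fst x) * G (snd x) * (\<Sum>p\<in>Sh (fst x) (snd x). psi_word p w) =
        F (fst x) * G (snd x) * ns_mult (psi_word (fst x)) (psi_word (snd x)) w"
      by simp
  qed
  also have "\<dots> = (\<Sum>s\<in>supp F. \<Sum>t\<in>supp G. F s * G t * ns_mult (psi_word s) (psi_word t) w)"
    by (simp add: sum.cartesian_product case_prod_beta)
  also have "\<dots> = ns_mult (psi F) (psi G) w"
  proof -
    have pF: "psi F = (\<lambda>w. \<Sum>s\<in>supp F. F s * psi_word s w)" by (rule psi_gen) (use F MPR_finite in auto)
    have pG: "psi G = (\<lambda>w. \<Sum>t\<in>supp G. G t * psi_word t w)" by (rule psi_gen) (use G MPR_finite in auto)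
    show ?thesis unfolding pF pG ns_mult_sum_left ns_mult_scale_left ns_mult_sum_right ns_mult_scale_right
      by (simp add: sum_distrib_left mult.assoc)
  qed
  finally show "psi (mpr_mult F G) w = ns_mult (psi F) (psi G) w" .
qed

lemma psi_word_id: "psi_word [1..<n+1] = S n"
proof (cases "n = 0")
  case True then show ?thesis by (simp add: psi_word_def)
next
  case False
  let ?p = "[1..<n+1]"
  have "set ?p = {1..n}" by auto
  then have pp: "perm_word ?p" by (simp add: perm_word_def)
  have nth: "?p ! k = Suc k" if "k < n" for k using that by (simp del: upt_Suc add: nth_upt)
  have gp: "gl ?p" unfolding gl_def
  proof (intro allI impI)
    fix i k k' assume h: "0 < i \<and> i < length ?p \<and> ?p ! (i - 1) < ?p ! i \<and> k < i \<and> i \<le> k' \<and> k' < length ?p"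
    moreover have "length ?p = n" by (simp del: upt_Suc)
    ultimately have "k < n" "k' < n" "k < k'" by auto
    then show "?p ! k < ?p ! k'" using nth[of k] nth[of k'] by (simp del: upt_Suc)
  qed
  have lp: "length ?p = n" by (simp del: upt_Suc)
  have nd: "\<not> (?p ! (i - 1) > ?p ! i)" if "1 \<le> i" "i < n" for i
    using nth[of i] nth[of "i - 1"] that by (simp del: upt_Suc)
  have ds: "desc ?p = {}" unfolding desc_def using nd lp by (auto simp del: upt_Suc)
  have "lsd ?p" using pp gp by (rule gl_lsd)
  moreover have "?p \<noteq> []" using False lp by auto
  ultimately have "psi_word ?p = R (comp (length ?p) (desc ?p))" by (rule psi_word_lsd)
  then have "psi_word ?p = R (comp n {})" unfolding ds lp .
  also have "comp n {} = [n]" by (simp add: comp_cmp)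
  finally show ?thesis by (simp add: R_single)
qed

definition zm :: "nat list \<Rightarrow> nat list \<Rightarrow> int" where
  "zm w = foldr ns_mult (map Zg w) ns_one"

lemma NSym_zm: "zm w \<in> NSym"
  unfolding zm_def by (induction w) auto

lemma ns_mult_ind:
  "ns_mult (\<lambda>v. if v = [a] then 1 else 0) (\<lambda>v. if v = u then 1 else 0) = (\<lambda>v. if v = a # u then 1 else 0)"
proof
  fix v :: "nat list"
  have e: "(take k v = [a] \<and> drop k v = u) \<longleftrightarrow> (k = 1 \<and> v = a # u)" if "k \<le> length v" for k
  proof
    assume h: "take k v = [a] \<and> drop k v = u"
    then have "v = a # u" by (metis append_Cons append_Nil append_take_drop_id)
    moreover have "length (take k v) = 1" using h by simp
    then have "k = 1" using that by simp
    ultimately show "k = 1 \<and> v = a # u" by simp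
  qed auto
  have "ns_mult (\<lambda>v. if v = [a] then 1 else 0) (\<lambda>v. if v = u then 1 else 0) v =
      (\<Sum>k\<le>length v. if k = 1 \<and> v = a # u then 1 else 0)"
    unfolding ns_mult_def by (intro sum.cong refl) (use e in auto)
  also have "\<dots> = (\<Sum>k\<le>length v. if k = 1 then (if v = a # u then 1 else 0) else 0)"
    by (intro sum.cong refl) auto
  also have "\<dots> = (if v = a # u then 1 else 0)"
    by (subst sum.delta) auto
  finally show "ns_mult (\<lambda>v. if v = [a] then 1 else 0) (\<lambda>v. if v = u then 1 else 0) v = (if v = a # u then 1 else 0)" .
qed

lemma zm_ind: "0 \<notin> set w \<Longrightarrow> zm w = (\<lambda>v. if v = w then 1 else 0)"
proof (induction w)
  case Nil then show ?case by (simp add: zm_def ns_one_def)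
next
  case (Cons a w)
  then have "zm (a # w) = ns_mult (\<lambda>v. if v = [a] then 1 else 0) (\<lambda>v. if v = w then 1 else 0)"
    by (simp add: zm_def Zg_def)
  then show ?case by (simp add: ns_mult_ind)
qed

lemma NSym_expand: "f \<in> NSym \<Longrightarrow> f = (\<lambda>v. \<Sum>w\<in>supp f. f w * zm w v)"
proof
  fix v assume f: "f \<in> NSym"
  have "(\<Sum>w\<in>supp f. f w * zm w v) = (\<Sum>w\<in>supp f. if w = v then f w else 0)"
  proof (rule sum.cong[OF refl])
    fix w assume "w \<in> supp f"
    then have "0 \<notin> set w" using f by (auto simp: NSym_def supp_def)
    then show "f w * zm w v = (if w = v then f w else 0)" by (auto simp: zm_ind)
  qed
  also have "\<dots> = f v" using f by (auto simp: sum.delta' NSym_def supp_def)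
  finally show "f v = (\<Sum>w\<in>supp f. f w * zm w v)" by simp
qed

lemma Zg_expand:
  assumes "0 < n"
  shows "Zg n = (\<lambda>w. (-1) ^ (n + 1) * (S n w + (\<Sum>i\<in>{1..<n}. (-1) ^ i * ns_mult (S (n - i)) (Zg i) w)))"
proof
  fix w
  let ?X = "\<Sum>i\<in>{1..<n}. (-1::int) ^ i * ns_mult (S (n - i)) (Zg i) w"
  have "{1..n} = insert n {1..<n}" using assms by auto
  then have "S n w = - (?X + (-1) ^ n * Zg n w)"
    using assms by (subst S.simps) (simp add: add.commute)
  moreover have "(-1::int) ^ n * (-1) ^ n = 1" by (simp flip: power_mult_distrib)
  ultimately show "Zg n w = (-1) ^ (n + 1) * (S n w + ?X)"
    by (simp add: algebra_simps)
qed

lemma retraction: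
  assumes h1: "\<forall>f\<in>NSym. ii f \<in> MPR" and h2: "ii ns_one = mpr_one"
    and h3: "\<forall>f\<in>NSym. \<forall>g\<in>NSym. ii (\<lambda>w. f w + g w) = (\<lambda>w. ii f w + ii g w)"
    and h4: "\<forall>f\<in>NSym. \<forall>g\<in>NSym. ii (ns_mult f g) = mpr_mult (ii f) (ii g)"
    and h5: "\<forall>n. ii (S n) = mpr_basis [1..<n+1]"
  shows "\<forall>f\<in>NSym. psi (ii f) = f"
proof -
  define phi where "phi f = psi (ii f)" for f
  have padd: "phi (\<lambda>w. f w + g w) = (\<lambda>w. phi f w + phi g w)" if "f \<in> NSym" "g \<in> NSym" for f g
    unfolding phi_def using that h1 h3 psi_add by simp
  have pmult: "phi (ns_mult f g) = ns_mult (phi f) (phi g)" if "f \<in> NSym" "g \<in> NSym" for f g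
    unfolding phi_def using that h1 h4 psi_mult by simp
  have pone: "phi ns_one = ns_one" unfolding phi_def h2 psi_one ..
  have pS: "phi (S n) = S n" for n using h5 psi_basis psi_word_id by (simp add: phi_def)
  have pzero: "phi (\<lambda>w. 0) = (\<lambda>w. 0)"
  proof
    fix w
    have h: "phi (\<lambda>w. 0 + 0) = (\<lambda>w. phi (\<lambda>w. 0) w + phi (\<lambda>w. 0) w)" by (rule padd) auto
    have "phi (\<lambda>w. 0) w = phi (\<lambda>w. 0) w + phi (\<lambda>w. 0) w" using fun_cong[OF h, of w] by simp
    then show "phi (\<lambda>w. 0) w = 0" by simp
  qed
  have pneg: "phi (\<lambda>w. - f w) = (\<lambda>w. - phi f w)" if "f \<in> NSym" for f
  proof
    fix w
    have h: "phi (\<lambda>w. f w + - f w) = (\<lambda>w. phi f w + phi (\<lambda>w. - f w) w)" using that by (intro padd) auto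
    have "0 = phi f w + phi (\<lambda>w. - f w) w" using fun_cong[OF h, of w] pzero by simp
    then show "phi (\<lambda>w. - f w) w = - phi f w" by linarith
  qed
  have pnat: "phi (\<lambda>w. int k * f w) = (\<lambda>w. int k * phi f w)" if "f \<in> NSym" for f k
  proof (induction k)
    case 0 then show ?case using pzero by simp
  next
    case (Suc k)
    have "phi (\<lambda>w. int (Suc k) * f w) = phi (\<lambda>w. f w + int k * f w)" by (simp add: algebra_simps)
    also have "\<dots> = (\<lambda>w. phi f w + phi (\<lambda>w. int k * f w) w)" using that by (intro padd) auto
    finally show ?case using Suc by (simp add: algebra_simps)
  qed
  have pscale: "phi (\<lambda>w. c * f w) = (\<lambda>w. c * phi f w)" if "f \<in> NSym" for f c
  proof (cases "c \<ge> 0")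
    case True
    then obtain k where "c = int k" by (metis nonneg_eq_int)
    then show ?thesis using pnat that by simp
  next
    case False
    define k where "k = nat (- c)"
    have c: "c = - int k" using False unfolding k_def by simp
    have "phi (\<lambda>w. c * f w) = phi (\<lambda>w. - (int k * f w))" using c by simp
    also have "\<dots> = (\<lambda>w. - phi (\<lambda>w. int k * f w) w)" using that by (intro pneg) auto
    finally show ?thesis using pnat that c by simp
  qed
  have psum: "phi (\<lambda>w. \<Sum>a\<in>A. f a w) = (\<lambda>w. \<Sum>a\<in>A. phi (f a) w)"
    if "finite A" "\<And>a. a \<in> A \<Longrightarrow> f a \<in> NSym" for A f
    using that
  proof (induction A rule: finite_induct)
    case empty then show ?case using pzero by simp
  next
    case (insert x F)
    have "phi (\<lambda>w. \<Sum>a\<in>insert x F. f a w) = phi (\<lambda>w. f x w + (\<Sum>a\<in>F. f a w))"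
      using insert by simp
    also have "\<dots> = (\<lambda>w. phi (f x) w + phi (\<lambda>w. \<Sum>a\<in>F. f a w) w)"
      using insert by (intro padd) auto
    finally show ?case using insert by simp
  qed
  have pZ: "phi (Zg n) = Zg n" for n
  proof (induction n rule: less_induct)
    case (less n)
    show ?case
    proof (cases "n = 0")
      case True then show ?thesis using pone by (simp add: Zg_def)
    next
      case False
      then have n: "0 < n" by simp
      let ?Y = "\<lambda>w. S n w + (\<Sum>i\<in>{1..<n}. (-1) ^ i * ns_mult (S (n - i)) (Zg i) w)"
      have mem: "(\<lambda>w. (\<Sum>i\<in>{1..<n}. (-1) ^ i * ns_mult (S (n - i)) (Zg i) w)) \<in> NSym"
        by (intro NSym_sum NSym_scale NSym_mult) auto
      have "phi (\<lambda>w. (\<Sum>i\<in>{1..<n}. (-1) ^ i * ns_mult (S (n - i)) (Zg i) w)) =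
          (\<lambda>w. (\<Sum>i\<in>{1..<n}. phi (\<lambda>w. (-1) ^ i * ns_mult (S (n - i)) (Zg i) w) w))"
        by (rule psum) (auto intro!: NSym_scale NSym_mult)
      also have "\<dots> = (\<lambda>w. (\<Sum>i\<in>{1..<n}. (-1) ^ i * ns_mult (S (n - i)) (Zg i) w))"
      proof (intro ext sum.cong refl)
        fix w i assume i: "i \<in> {1..<n}"
        have "phi (\<lambda>w. (-1) ^ i * ns_mult (S (n - i)) (Zg i) w) = (\<lambda>w. (-1) ^ i * phi (ns_mult (S (n - i)) (Zg i)) w)"
          by (rule pscale) auto
        also have "\<dots> = (\<lambda>w. (-1) ^ i * ns_mult (S (n - i)) (Zg i) w)"
          using pmult[of "S (n - i)" "Zg i"] pS less.IH[of i] i NSym_S NSym_Zg by auto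
        finally show "phi (\<lambda>w. (-1) ^ i * ns_mult (S (n - i)) (Zg i) w) w = (-1) ^ i * ns_mult (S (n - i)) (Zg i) w"
          by simp
      qed
      finally have pX: "phi (\<lambda>w. (\<Sum>i\<in>{1..<n}. (-1) ^ i * ns_mult (S (n - i)) (Zg i) w)) =
          (\<lambda>w. (\<Sum>i\<in>{1..<n}. (-1) ^ i * ns_mult (S (n - i)) (Zg i) w))" .
      have pY: "phi ?Y = ?Y" using padd[OF NSym_S mem] pS pX by simp
      have YN: "?Y \<in> NSym" using mem by (intro NSym_add) auto
      have "phi (Zg n) = phi (\<lambda>w. (-1) ^ (n + 1) * ?Y w)" using Zg_expand[OF n] by simp
      also have "\<dots> = (\<lambda>w. (-1) ^ (n + 1) * phi ?Y w)" using YN by (rule pscale)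
      also have "\<dots> = Zg n" using pY Zg_expand[OF n] by simp
      finally show ?thesis .
    qed
  qed
  have pzm: "phi (zm w) = zm w" for w
  proof (induction w)
    case Nil then show ?case using pone by (simp add: zm_def)
  next
    case (Cons a w)
    have "phi (zm (a # w)) = phi (ns_mult (Zg a) (zm w))" by (simp add: zm_def)
    also have "\<dots> = ns_mult (phi (Zg a)) (phi (zm w))" by (rule pmult) (auto simp: NSym_zm)
    finally show ?case using Cons pZ by (simp add: zm_def)
  qed
  show ?thesis
  proof
    fix f assume f: "f \<in> NSym"
    have fin: "finite (supp f)" using f by (simp add: NSym_def supp_def)
    have "phi f = phi (\<lambda>v. \<Sum>w\<in>supp f. f w * zm w v)" using NSym_expand[OF f] by simp
    also have "\<dots> = (\<lambda>v. \<Sum>w\<in>supp f. phi (\<lambda>v. f w * zm w v) v)"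
      by (rule psum[OF fin]) (auto intro: NSym_scale NSym_zm)
    also have "\<dots> = (\<lambda>v. \<Sum>w\<in>supp f. f w * zm w v)"
      using pscale[OF NSym_zm] pzm by simp
    also have "\<dots> = f" using NSym_expand[OF f] by simp
    finally show "psi (ii f) = f" unfolding phi_def .
  qed
qed

theorem theorem14p2:
  shows "(\<forall>F\<in>MPR. psi F \<in> NSym)
       \<and> psi mpr_one = ns_one
       \<and> (\<forall>F\<in>MPR. \<forall>G\<in>MPR. psi (\<lambda>w. F w + G w) = (\<lambda>w. psi F w + psi G w))
       \<and> (\<forall>F\<in>MPR. \<forall>G\<in>MPR. psi (mpr_mult F G) = ns_mult (psi F) (psi G))
       \<and> (\<forall>i :: (nat list \<Rightarrow> int) \<Rightarrow> (nat list \<Rightarrow> int).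
            (\<forall>f\<in>NSym. i f \<in> MPR)
          \<and> i ns_one = mpr_one
          \<and> (\<forall>f\<in>NSym. \<forall>g\<in>NSym. i (\<lambda>w. f w + g w) = (\<lambda>w. i f w + i g w))
          \<and> (\<forall>f\<in>NSym. \<forall>g\<in>NSym. i (ns_mult f g) = mpr_mult (i f) (i g))
          \<and> (\<forall>n. i (S n) = mpr_basis [1..<n+1])
          \<longrightarrow> (\<forall>f\<in>NSym. psi (i f) = f))"
proof (intro conjI)
  show "\<forall>F\<in>MPR. psi F \<in> NSym" by blast
  show "psi mpr_one = ns_one" by (rule psi_one)
  show "\<forall>F\<in>MPR. \<forall>G\<in>MPR. psi (\<lambda>w. F w + G w) = (\<lambda>w. psi F w + psi G w)" using psi_add by blast
  show "\<forall>F\<in>MPR. \<forall>G\<in>MPR. psi (mpr_mult F G) = ns_mult (psi F) (psi G)" using psi_mult by blast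
  show "\<forall>i :: (nat list \<Rightarrow> int) \<Rightarrow> (nat list \<Rightarrow> int).
            (\<forall>f\<in>NSym. i f \<in> MPR)
          \<and> i ns_one = mpr_one
          \<and> (\<forall>f\<in>NSym. \<forall>g\<in>NSym. i (\<lambda>w. f w + g w) = (\<lambda>w. i f w + i g w))
          \<and> (\<forall>f\<in>NSym. \<forall>g\<in>NSym. i (ns_mult f g) = mpr_mult (i f) (i g))
          \<and> (\<forall>n. i (S n) = mpr_basis [1..<n+1])
          \<longrightarrow> (\<forall>f\<in>NSym. psi (i f) = f)"
  proof (intro allI impI)
    fix i :: "(nat list \<Rightarrow> int) \<Rightarrow> (nat list \<Rightarrow> int)"
    assume h: "(\<forall>f\<in>NSym. i f \<in> MPR)
          \<and> i ns_one = mpr_one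
          \<and> (\<forall>f\<in>NSym. \<forall>g\<in>NSym. i (\<lambda>w. f w + g w) = (\<lambda>w. i f w + i g w))
          \<and> (\<forall>f\<in>NSym. \<forall>g\<in>NSym. i (ns_mult f g) = mpr_mult (i f) (i g))
          \<and> (\<forall>n. i (S n) = mpr_basis [1..<n+1])"
    show "\<forall>f\<in>NSym. psi (i f) = f" by (rule retraction) (use h in auto)
  qed
qed

end
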